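(* Let $G$ be a $V_5$-free graph with $m\ge 8$ edges. Then \[ \lambda(G)\le \frac{1+\sqrt{4m-3}}{2}, \] and equality holds if and only if $G = K_2\vee \frac{m-1}{2}K_1$ (up to isolated vertices).
   Context: All graphs are finite and simple. $\lambda(G)$ denotes the spectral radius (largest eigenvalue of the adjacency matrix) of $G$. $P_k$ is the path on $k$ vertices, $K_n$ the complete graph, $tK_1$ the edgeless graph on $t$ vertices, and $G\vee H$ the join of $G$ and $H$ (disjoint union plus all edges between $V(G)$ and $V(H)$). The fan graph is $V_k=K_1\vee P_{k-1}$; in particular $V_5=K_1\vee P_4$. A graph is $F$-free if it contains no (not necessarily induced) subgraph isomorphic to $F$. Thus $K_2\vee \frac{m-1}{2}K_1$ (which exists when $m$ is odd) has exactly $m$ edges. *)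

theory Defs
  imports Complex_Main
begin

definition simple_graph :: "'a set \<Rightarrow> 'a set set \<Rightarrow> bool" where
  "simple_graph V E \<longleftrightarrow> finite V \<and> (\<forall>e\<in>E. e \<subseteq> V \<and> card e = 2)"

definition adj :: "'a set set \<Rightarrow> 'a \<Rightarrow> 'a \<Rightarrow> real" where
  "adj E u v = (if {u, v} \<in> E then 1 else 0)"

definition adj_eigenvalue :: "'a set \<Rightarrow> 'a set set \<Rightarrow> real \<Rightarrow> bool" where
  "adj_eigenvalue V E \<mu> \<longleftrightarrow>
     (\<exists>x :: 'a \<Rightarrow> real. (\<exists>v\<in>V. x v \<noteq> 0) \<and>
        (\<forall>u\<in>V. (\<Sum>w\<in>V. adj E u w * x w) = \<mu> * x u))"

definition spectral_radius :: "'a set \<Rightarrow> 'a set set \<Rightarrow> real" where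
  "spectral_radius V E = Max {\<mu>. adj_eigenvalue V E \<mu>}"

definition contains_subgraph :: "'b set \<Rightarrow> 'b set set \<Rightarrow> 'a set \<Rightarrow> 'a set set \<Rightarrow> bool" where
  "contains_subgraph VF EF V E \<longleftrightarrow>
     (\<exists>f. inj_on f VF \<and> f ` VF \<subseteq> V \<and> (\<forall>e\<in>EF. f ` e \<in> E))"

text \<open>Fan V_5 = K_1 join P_4: centre 0, path 1-2-3-4.\<close>
definition fan5_V :: "nat set" where "fan5_V = {0,1,2,3,4}"
definition fan5_E :: "nat set set" where
  "fan5_E = {{0,1},{0,2},{0,3},{0,4},{1,2},{2,3},{3,4}}"

text \<open>K_2 join kK_1: vertices 0,1 adjacent, and 2..k+1 adjacent to both.\<close>
definition book_V :: "nat \<Rightarrow> nat set" where "book_V k = {0..<k+2}"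
definition book_E :: "nat \<Rightarrow> nat set set" where
  "book_E k = {{0,1}} \<union> {{0,i} | i. 2 \<le> i \<and> i < k+2} \<union> {{1,i} | i. 2 \<le> i \<and> i < k+2}"

definition graph_iso :: "'a set \<Rightarrow> 'a set set \<Rightarrow> 'b set \<Rightarrow> 'b set set \<Rightarrow> bool" where
  "graph_iso V E V' E' \<longleftrightarrow>
     (\<exists>f. bij_betw f V V' \<and> (\<forall>u\<in>V. \<forall>v\<in>V. {u,v} \<in> E \<longleftrightarrow> {f u, f v} \<in> E'))"

definition non_isolated :: "'a set \<Rightarrow> 'a set set \<Rightarrow> 'a set" where
  "non_isolated V E = {v\<in>V. \<exists>e\<in>E. v \<in> e}"

end

theory Submission
  imports Defs "HOL-Analysis.Analysis"
begin

lemma adj_sym: "adj E u w = adj E w u" by (simp add: adj_def insert_commute)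
lemma adj_nonneg: "0 \<le> adj E u w" by (simp add: adj_def)
lemma adj_le1: "adj E u w \<le> 1" by (simp add: adj_def)
lemma adj_self: "simple_graph V E \<Longrightarrow> adj E u u = 0"
  by (auto simp: adj_def simple_graph_def)
lemma adj_in: "simple_graph V E \<Longrightarrow> adj E u w \<noteq> 0 \<Longrightarrow> u \<in> V \<and> w \<in> V"
  by (auto simp: adj_def simple_graph_def split: if_splits)

definition rq :: "'a set \<Rightarrow> 'a set set \<Rightarrow> ('a \<Rightarrow> real) \<Rightarrow> real" where
  "rq V E x = (\<Sum>u\<in>V. \<Sum>w\<in>V. adj E u w * x u * x w)"
definition nq :: "'a set \<Rightarrow> ('a \<Rightarrow> real) \<Rightarrow> real" where
  "nq V x = (\<Sum>u\<in>V. (x u)^2)"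
definition Ax :: "'a set \<Rightarrow> 'a set set \<Rightarrow> ('a \<Rightarrow> real) \<Rightarrow> 'a \<Rightarrow> real" where
  "Ax V E x u = (\<Sum>w\<in>V. adj E u w * x w)"

lemma rq_Ax: "rq V E x = (\<Sum>u\<in>V. x u * Ax V E x u)"
  by (simp add: rq_def Ax_def sum_distrib_left mult_ac)

lemma rq_scale: "rq V E (\<lambda>v. c * x v) = c^2 * rq V E x"
  by (simp add: rq_def sum_distrib_left power2_eq_square mult_ac)
lemma nq_scale: "nq V (\<lambda>v. c * x v) = c^2 * nq V x"
  by (simp add: nq_def sum_distrib_left power_mult_distrib)
lemma nq_nonneg: "0 \<le> nq V x" by (simp add: nq_def sum_nonneg)

lemma rq_cong: "(\<And>v. v \<in> V \<Longrightarrow> x v = y v) \<Longrightarrow> rq V E x = rq V E y"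
  by (simp add: rq_def)
lemma nq_cong: "(\<And>v. v \<in> V \<Longrightarrow> x v = y v) \<Longrightarrow> nq V x = nq V y"
  by (simp add: nq_def)

lemma nq_zero: "finite V \<Longrightarrow> nq V x = 0 \<Longrightarrow> v \<in> V \<Longrightarrow> x v = 0"
  unfolding nq_def using sum_nonneg_eq_0_iff[of V "\<lambda>u. (x u)^2"] by auto

lemma compact_K:
  assumes "finite V"
  shows "compact {x :: 'a \<Rightarrow> real. (\<forall>v. v \<notin> V \<longrightarrow> x v = 0) \<and> nq V x = 1}"
proof -
  define P where "P = Pi\<^sub>E UNIV (\<lambda>v::'a. if v \<in> V then {-1..1::real} else {0})"
  have cP: "compact P"
  proof -
    have "compactin (product_topology (\<lambda>i. euclidean) UNIV) P"
      unfolding P_def by (subst compactin_PiE) auto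
    then show ?thesis by (simp add: euclidean_product_topology)
  qed
  have cl: "closed {x :: 'a \<Rightarrow> real. (\<forall>v. v \<notin> V \<longrightarrow> x v = 0) \<and> nq V x = 1}"
  proof -
    have c1: "closed {x :: 'a \<Rightarrow> real. \<forall>v. (if v \<in> V then 0 else 1) * x v = 0}"
      by (intro closed_Collect_all closed_Collect_eq continuous_intros continuous_on_product_coordinates)
    have c2: "closed {x :: 'a \<Rightarrow> real. nq V x = 1}"
      unfolding nq_def
      by (intro closed_Collect_eq continuous_intros continuous_on_product_coordinates)
    have "{x :: 'a \<Rightarrow> real. (\<forall>v. v \<notin> V \<longrightarrow> x v = 0) \<and> nq V x = 1} =
          {x :: 'a \<Rightarrow> real. \<forall>v. (if v \<in> V then 0 else 1) * x v = 0} \<inter> {x. nq V x = 1}"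
      by auto
    then show ?thesis using c1 c2 by (simp add: closed_Int)
  qed
  have sub: "{x :: 'a \<Rightarrow> real. (\<forall>v. v \<notin> V \<longrightarrow> x v = 0) \<and> nq V x = 1} \<subseteq> P"
  proof
    fix x :: "'a \<Rightarrow> real" assume x: "x \<in> {x. (\<forall>v. v \<notin> V \<longrightarrow> x v = 0) \<and> nq V x = 1}"
    have "x v \<in> (if v \<in> V then {-1..1} else {0})" for v
    proof (cases "v \<in> V")
      case True
      have "(x v)^2 \<le> nq V x" unfolding nq_def
        by (rule member_le_sum) (use True assms in auto)
      then have "(x v)^2 \<le> 1" using x by simp
      then have "\<bar>x v\<bar> \<le> 1" by (simp add: abs_square_le_1)
      then show ?thesis using True by auto
    next
      case False then show ?thesis using x by auto
    qed
    then show "x \<in> P" unfolding P_def by auto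
  qed
  have "{x :: 'a \<Rightarrow> real. (\<forall>v. v \<notin> V \<longrightarrow> x v = 0) \<and> nq V x = 1} = P \<inter> {x. (\<forall>v. v \<notin> V \<longrightarrow> x v = 0) \<and> nq V x = 1}"
    using sub by blast
  then show ?thesis using compact_Int_closed[OF cP cl] by simp
qed

lemma rayleigh_max:
  assumes G: "simple_graph V E" and ne: "V \<noteq> {}"
  obtains r z where "\<forall>v. v \<notin> V \<longrightarrow> z v = 0" "nq V z = 1" "rq V E z = r"
    "\<And>x. rq V E x \<le> r * nq V x"
proof -
  have fin: "finite V" using G by (simp add: simple_graph_def)
  define K where "K = {x :: 'a \<Rightarrow> real. (\<forall>v. v \<notin> V \<longrightarrow> x v = 0) \<and> nq V x = 1}"
  have cK: "compact K" unfolding K_def by (rule compact_K[OF fin])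
  obtain v0 where v0: "v0 \<in> V" using ne by auto
  have "(\<lambda>v. if v = v0 then 1 else 0) \<in> K"
  proof -
    have hh: "(\<lambda>u. ((if u = v0 then 1 else 0::real))^2) = (\<lambda>u. if u = v0 then 1 else 0)" by auto
    have "(\<Sum>u\<in>V. ((if u = v0 then 1 else 0::real))^2) = 1"
      by (subst hh) (simp add: sum.delta' v0 fin)
    then show ?thesis unfolding K_def nq_def using v0 by simp
  qed
  then have neK: "K \<noteq> {}" by auto
  have cont: "continuous_on K (rq V E)"
    unfolding rq_def
    by (intro continuous_intros continuous_on_product_coordinates[THEN continuous_on_subset]) auto
  obtain z where zK: "z \<in> K" and zmax: "\<And>y. y \<in> K \<Longrightarrow> rq V E y \<le> rq V E z"
    using continuous_attains_sup[OF cK neK cont] by auto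
  have main: "rq V E x \<le> rq V E z * nq V x" for x
  proof -
    define x' where "x' = (\<lambda>v. if v \<in> V then x v else 0)"
    have e1: "rq V E x' = rq V E x" by (rule rq_cong) (simp add: x'_def)
    have e2: "nq V x' = nq V x" by (rule nq_cong) (simp add: x'_def)
    show ?thesis
    proof (cases "nq V x = 0")
      case True
      then have "\<And>v. v \<in> V \<Longrightarrow> x v = 0" using nq_zero[OF fin True] by blast
      then have "rq V E x = 0" unfolding rq_def by simp
      then show ?thesis using True by simp
    next
      case False
      then have pos: "nq V x > 0" using nq_nonneg[of V x] by simp
      define c where "c = 1 / sqrt (nq V x)"
      have c2: "c^2 = 1 / nq V x" using pos by (simp add: c_def power_divide)
      have n1: "nq V (\<lambda>v. c * x' v) = 1"
        unfolding nq_scale e2 c2 using pos by simp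
      have n2: "\<forall>v. v \<notin> V \<longrightarrow> c * x' v = 0" by (simp add: x'_def)
      have "(\<lambda>v. c * x' v) \<in> K"
        unfolding K_def using n1 n2 by blast
      then have "rq V E (\<lambda>v. c * x' v) \<le> rq V E z" by (rule zmax)
      moreover have "rq V E (\<lambda>v. c * x' v) = rq V E x / nq V x"
        unfolding rq_scale e1 c2 by simp
      ultimately have "rq V E x / nq V x \<le> rq V E z" by simp
      then show ?thesis using pos by (simp add: divide_le_eq mult.commute)
    qed
  qed
  show ?thesis
  proof (rule that[of z "rq V E z"])
    show "\<forall>v. v \<notin> V \<longrightarrow> z v = 0" "nq V z = 1" using zK unfolding K_def by blast+
  qed (use main in auto)
qed

lemma sum_if_eq: "finite V \<Longrightarrow> v \<in> V \<Longrightarrow> (\<Sum>w\<in>V. (if w = v then f w else 0)) = (f v :: real)"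
  by (simp add: sum.delta')

lemma stationary:
  assumes G: "simple_graph V E"
    and le: "\<And>x. rq V E x \<le> r * nq V x"
    and eq: "rq V E z = r * nq V z"
    and v: "v \<in> V"
  shows "Ax V E z v = r * z v"
proof -
  have fin: "finite V" using G by (simp add: simple_graph_def)
  define d where "d = Ax V E z v - r * z v"
  have key: "2 * t * d \<le> r * t^2" for t
  proof -
    define x where "x = (\<lambda>w. z w + (if w = v then t else 0))"
    have "rq V E x = (\<Sum>u\<in>V. \<Sum>w\<in>V. adj E u w * z u * z w
              + (if u = v then t * (adj E u w * z w) else 0)
              + (if w = v then t * (adj E u w * z u) else 0)
              + (if u = v then (if w = v then t * t * adj E u w else 0) else 0))"
      unfolding rq_def x_def by (intro sum.cong refl) (auto simp: algebra_simps)
    also have "\<dots> = rq V E z + t * Ax V E z v + t * Ax V E z v + t * t * adj E v v"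
    proof -
      have a1: "(\<Sum>u\<in>V. \<Sum>w\<in>V. (if u = v then t * (adj E u w * z w) else 0)) = t * Ax V E z v"
      proof -
        have "(\<Sum>w\<in>V. (if u = v then t * (adj E u w * z w) else 0)) = (if u = v then t * Ax V E z v else 0)" for u
          by (cases "u = v") (auto simp: Ax_def sum_distrib_left)
        then show ?thesis using fin v by (simp add: sum.delta')
      qed
      have a2: "(\<Sum>u\<in>V. \<Sum>w\<in>V. (if w = v then t * (adj E u w * z u) else 0)) = t * Ax V E z v"
      proof -
        have "(\<Sum>w\<in>V. (if w = v then t * (adj E u w * z u) else 0)) = t * (adj E v u * z u)" for u
          using fin v by (simp add: sum.delta' adj_sym[of E u v])
        then show ?thesis using fin v by (simp add: Ax_def sum_distrib_left adj_sym[of E _ v])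
      qed
      have a3: "(\<Sum>u\<in>V. \<Sum>w\<in>V. (if u = v then (if w = v then t * t * adj E u w else 0) else 0)) = t * t * adj E v v"
      proof -
        have "(\<Sum>w\<in>V. (if u = v then (if w = v then t * t * adj E u w else 0) else 0)) = (if u = v then t * t * adj E v v else 0)" for u
          using fin v by (cases "u = v") (simp_all add: sum.delta')
        then show ?thesis using fin v by (simp add: sum.delta')
      qed
      show ?thesis using a1 a2 a3 by (simp add: sum.distrib rq_def)
    qed
    finally have r1: "rq V E x = rq V E z + 2 * t * Ax V E z v"
      using adj_self[OF G, of v] by (simp add: algebra_simps)
    have "nq V x = (\<Sum>u\<in>V. (z u)^2 + (if u = v then 2 * t * z u + t^2 else 0))"
      unfolding nq_def x_def by (intro sum.cong refl) (simp add: power2_eq_square algebra_simps)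
    also have "\<dots> = nq V z + 2 * t * z v + t^2"
      using fin v by (simp only: sum.distrib nq_def sum_if_eq)
    finally have r2: "nq V x = nq V z + 2 * t * z v + t^2" .
    have "rq V E x \<le> r * nq V x" by (rule le)
    then have "rq V E z + 2 * t * Ax V E z v \<le> r * (nq V z + 2 * t * z v + t^2)" using r1 r2 by simp
    then show ?thesis using eq unfolding d_def by (simp add: algebra_simps)
  qed
  show ?thesis
  proof (rule ccontr)
    assume "Ax V E z v \<noteq> r * z v"
    then have dn: "d \<noteq> 0" by (simp add: d_def)
    define s where "s = 1 / (\<bar>r\<bar> + 1)"
    have s0: "s > 0" by (simp add: s_def add_pos_nonneg)
    have "2 * (s * d) * d \<le> r * (s * d)^2" by (rule key)
    then have "2 * s * d^2 \<le> (r * s) * (s * d^2)" by (simp add: power2_eq_square algebra_simps)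
    moreover have "s * d^2 > 0" using dn s0 by simp
    ultimately have "2 * (s * d^2) \<le> (r * s) * (s * d^2)" by (simp add: mult_ac)
    then have "2 \<le> r * s" using \<open>s * d^2 > 0\<close> by (simp add: mult_le_cancel_right_pos)
    moreover have "r * s < 1"
    proof -
      have p: "\<bar>r\<bar> + 1 > 0" by simp
      have "r < \<bar>r\<bar> + 1" by linarith
      then have "r / (\<bar>r\<bar> + 1) < 1" using p by (simp add: divide_less_eq)
      then show ?thesis by (simp add: s_def)
    qed
    ultimately show False by simp
  qed
qed

definition ip :: "'a set \<Rightarrow> ('a \<Rightarrow> real) \<Rightarrow> ('a \<Rightarrow> real) \<Rightarrow> real" where
  "ip V x y = (\<Sum>u\<in>V. x u * y u)"

lemma eig_orth:
  assumes x: "\<forall>u\<in>V. Ax V E x u = \<mu> * x u" and y: "\<forall>u\<in>V. Ax V E y u = \<nu> * y u"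
    and ne: "\<mu> \<noteq> \<nu>"
  shows "ip V x y = 0"
proof -
  have "\<mu> * ip V x y = (\<Sum>u\<in>V. Ax V E x u * y u)"
    unfolding ip_def sum_distrib_left using x by (intro sum.cong) auto
  also have "\<dots> = (\<Sum>u\<in>V. \<Sum>w\<in>V. adj E u w * x w * y u)"
    unfolding Ax_def by (simp add: sum_distrib_right)
  also have "\<dots> = (\<Sum>w\<in>V. \<Sum>u\<in>V. adj E w u * y u * x w)"
    by (subst sum.swap) (simp add: adj_sym mult_ac)
  also have "\<dots> = (\<Sum>w\<in>V. Ax V E y w * x w)"
    unfolding Ax_def by (simp add: sum_distrib_right)
  also have "\<dots> = \<nu> * ip V x y"
    unfolding ip_def sum_distrib_left using y by (intro sum.cong) auto
  finally show ?thesis using ne by simp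
qed

lemma eig_le:
  assumes ev: "adj_eigenvalue V E \<mu>" and le: "\<And>x. rq V E x \<le> r * nq V x" and fin: "finite V"
  shows "\<mu> \<le> r"
proof -
  obtain x where xv: "\<exists>v\<in>V. x v \<noteq> 0" and eq: "\<forall>u\<in>V. Ax V E x u = \<mu> * x u"
    using ev unfolding adj_eigenvalue_def Ax_def by blast
  have "rq V E x = (\<Sum>u\<in>V. x u * (\<mu> * x u))"
    unfolding rq_Ax using eq by (intro sum.cong) auto
  also have "\<dots> = \<mu> * nq V x" unfolding nq_def by (simp add: sum_distrib_left power2_eq_square mult_ac)
  finally have "\<mu> * nq V x \<le> r * nq V x" using le[of x] by simp
  moreover have "nq V x > 0"
  proof -
    obtain v where "v \<in> V" "x v \<noteq> 0" using xv by blast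
    then have "(x v)^2 \<le> nq V x" "(x v)^2 > 0" unfolding nq_def
      by (auto intro!: member_le_sum fin)
    then show ?thesis by linarith
  qed
  ultimately show ?thesis by simp
qed

lemma bessel:
  assumes fin: "finite V" and finF: "finite F" and v: "v \<in> V"
    and on: "\<And>\<mu> \<nu>. \<mu> \<in> F \<Longrightarrow> \<nu> \<in> F \<Longrightarrow> ip V (X \<mu>) (X \<nu>) = (if \<mu> = \<nu> then 1 else 0)"
  shows "(\<Sum>\<mu>\<in>F. (X \<mu> v)^2) \<le> 1"
proof -
  define c where "c \<mu> = X \<mu> v" for \<mu>
  define g where "g w = (\<Sum>\<mu>\<in>F. c \<mu> * X \<mu> w)" for w
  define s where "s = (\<Sum>\<mu>\<in>F. (c \<mu>)^2)"
  have gv: "g v = s" unfolding g_def s_def c_def by (simp add: power2_eq_square)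
  have gg: "(\<Sum>w\<in>V. (g w)^2) = s"
  proof -
    have "(\<Sum>w\<in>V. (g w)^2) = (\<Sum>w\<in>V. \<Sum>\<mu>\<in>F. \<Sum>\<nu>\<in>F. c \<mu> * c \<nu> * (X \<mu> w * X \<nu> w))"
      unfolding g_def power2_eq_square sum_product by (simp add: mult_ac)
    also have "\<dots> = (\<Sum>\<mu>\<in>F. \<Sum>\<nu>\<in>F. c \<mu> * c \<nu> * ip V (X \<mu>) (X \<nu>))"
      unfolding ip_def sum_distrib_left
      by (subst sum.swap) (simp add: sum.swap[of _ V])
    also have "\<dots> = (\<Sum>\<mu>\<in>F. \<Sum>\<nu>\<in>F. (if \<nu> = \<mu> then c \<mu> * c \<mu> else 0))"
      by (intro sum.cong refl) (auto simp: on)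
    also have "\<dots> = s" unfolding s_def using finF by (simp add: power2_eq_square)
    finally show ?thesis .
  qed
  have "0 \<le> (\<Sum>w\<in>V. ((if w = v then 1 else 0) - g w)^2)" by (intro sum_nonneg) auto
  also have "\<dots> = (\<Sum>w\<in>V. (if w = v then 1 - 2 * g w else 0) + (g w)^2)"
    by (intro sum.cong refl) (auto simp: power2_eq_square algebra_simps)
  also have "\<dots> = 1 - 2 * g v + s"
    using fin v gg by (simp add: sum.distrib sum.delta')
  finally have "0 \<le> 1 - s" using gv by simp
  then show ?thesis unfolding s_def c_def by simp
qed

lemma eig_finite:
  assumes G: "simple_graph V E"
  shows "finite {\<mu>. adj_eigenvalue V E \<mu>}"
proof (rule ccontr)
  assume inf: "infinite {\<mu>. adj_eigenvalue V E \<mu>}"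
  have fin: "finite V" using G by (simp add: simple_graph_def)
  define Y where "Y \<mu> = (SOME x. (\<exists>v\<in>V. x v \<noteq> 0) \<and> (\<forall>u\<in>V. Ax V E x u = \<mu> * x u))" for \<mu>
  define X where "X \<mu> = (\<lambda>v. Y \<mu> v / sqrt (nq V (Y \<mu>)))" for \<mu>
  have Yp: "(\<exists>v\<in>V. Y \<mu> v \<noteq> 0) \<and> (\<forall>u\<in>V. Ax V E (Y \<mu>) u = \<mu> * Y \<mu> u)"
    if "adj_eigenvalue V E \<mu>" for \<mu>
  proof -
    have "\<exists>x. (\<exists>v\<in>V. x v \<noteq> 0) \<and> (\<forall>u\<in>V. Ax V E x u = \<mu> * x u)"
      using that unfolding adj_eigenvalue_def Ax_def by blast
    then show ?thesis unfolding Y_def by (rule someI_ex)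
  qed
  have npos: "nq V (Y \<mu>) > 0" if ev: "adj_eigenvalue V E \<mu>" for \<mu>
  proof -
    obtain v where "v \<in> V" "Y \<mu> v \<noteq> 0" using Yp[OF ev] by blast
    then have "(Y \<mu> v)^2 \<le> nq V (Y \<mu>)" "(Y \<mu> v)^2 > 0" unfolding nq_def
      by (auto intro!: member_le_sum fin)
    then show ?thesis by linarith
  qed
  have Xeig: "\<forall>u\<in>V. Ax V E (X \<mu>) u = \<mu> * X \<mu> u" if "adj_eigenvalue V E \<mu>" for \<mu>
    using Yp[OF that] unfolding X_def Ax_def
    by (simp add: sum_divide_distrib[symmetric] mult.assoc)
  have Xn: "ip V (X \<mu>) (X \<mu>) = 1" if "adj_eigenvalue V E \<mu>" for \<mu>
  proof -
    have "ip V (X \<mu>) (X \<mu>) = nq V (Y \<mu>) / (sqrt (nq V (Y \<mu>)))^2"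
      unfolding ip_def X_def nq_def by (simp add: sum_divide_distrib power2_eq_square)
    then show ?thesis using npos[OF that] by simp
  qed
  obtain F where F: "F \<subseteq> {\<mu>. adj_eigenvalue V E \<mu>}" "finite F" "card F = card V + 1"
    using infinite_arbitrarily_large[OF inf] by blast
  have on: "ip V (X \<mu>) (X \<nu>) = (if \<mu> = \<nu> then 1 else 0)" if "\<mu> \<in> F" "\<nu> \<in> F" for \<mu> \<nu>
  proof (cases "\<mu> = \<nu>")
    case True then show ?thesis using that F(1) Xn by auto
  next
    case False
    have "adj_eigenvalue V E \<mu>" "adj_eigenvalue V E \<nu>" using that F(1) by auto
    then show ?thesis using False eig_orth[OF Xeig Xeig] by simp
  qed
  have "real (card F) = (\<Sum>\<mu>\<in>F. ip V (X \<mu>) (X \<mu>))"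
    using on by simp
  also have "\<dots> = (\<Sum>v\<in>V. \<Sum>\<mu>\<in>F. (X \<mu> v)^2)"
    unfolding ip_def by (subst sum.swap) (simp add: power2_eq_square)
  also have "\<dots> \<le> (\<Sum>v\<in>V. 1)"
    by (intro sum_mono bessel[OF fin F(2)] on) auto
  finally have "real (card F) \<le> real (card V)" by simp
  then show False using F(3) by simp
qed

lemma abs_rq: "rq V E x \<le> rq V E (\<lambda>v. \<bar>x v\<bar>)"
  unfolding rq_def
proof (intro sum_mono)
  fix u w
  have "x u * x w \<le> \<bar>x u\<bar> * \<bar>x w\<bar>" by (metis abs_ge_self abs_mult)
  then have "adj E u w * (x u * x w) \<le> adj E u w * (\<bar>x u\<bar> * \<bar>x w\<bar>)"
    by (rule mult_left_mono) (rule adj_nonneg)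
  then show "adj E u w * x u * x w \<le> adj E u w * \<bar>x u\<bar> * \<bar>x w\<bar>" by (simp add: mult.assoc)
qed

lemma spec_char:
  assumes G: "simple_graph V E" and ne: "V \<noteq> {}"
  shows "\<exists>y. (\<forall>v. 0 \<le> y v) \<and> (\<forall>v. v \<notin> V \<longrightarrow> y v = 0) \<and> (\<exists>v\<in>V. y v \<noteq> 0)
      \<and> (\<forall>u\<in>V. Ax V E y u = spectral_radius V E * y u)"
    and "\<And>\<mu>. adj_eigenvalue V E \<mu> \<Longrightarrow> \<mu> \<le> spectral_radius V E"
    and "\<And>x. rq V E x \<le> spectral_radius V E * nq V x"
proof -
  have fin: "finite V" using G by (simp add: simple_graph_def)
  obtain r z where z0: "\<forall>v. v \<notin> V \<longrightarrow> z v = 0" and zn: "nq V z = 1" and zr: "rq V E z = r"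
    and le: "\<And>x. rq V E x \<le> r * nq V x"
    by (rule rayleigh_max[OF G ne]) metis
  have znz: "\<exists>v\<in>V. z v \<noteq> 0"
  proof (rule ccontr)
    assume "\<not> ?thesis"
    then have "nq V z = 0" unfolding nq_def by simp
    then show False using zn by simp
  qed
  have zeig: "\<forall>u\<in>V. Ax V E z u = r * z u"
    using stationary[OF G le] zn zr by simp
  have rev: "adj_eigenvalue V E r"
    unfolding adj_eigenvalue_def using znz zeig unfolding Ax_def by blast
  have allle: "\<And>\<mu>. adj_eigenvalue V E \<mu> \<Longrightarrow> \<mu> \<le> r" using eig_le le fin by blast
  have sr: "spectral_radius V E = r"
    unfolding spectral_radius_def
    by (rule Max_eqI[OF eig_finite[OF G]]) (use rev allle in auto)
  define y where "y = (\<lambda>v. \<bar>z v\<bar>)"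
  have yn: "nq V y = 1" using zn unfolding nq_def y_def by simp
  have "rq V E y = r * nq V y"
    using abs_rq[of V E z] le[of y] zr yn unfolding y_def by simp
  then have yeig: "\<forall>u\<in>V. Ax V E y u = r * y u"
    using stationary[OF G le] by simp
  show "\<exists>y. (\<forall>v. 0 \<le> y v) \<and> (\<forall>v. v \<notin> V \<longrightarrow> y v = 0) \<and> (\<exists>v\<in>V. y v \<noteq> 0)
      \<and> (\<forall>u\<in>V. Ax V E y u = spectral_radius V E * y u)"
    by (rule exI[of _ y]) (use z0 znz yeig sr in \<open>auto simp: y_def\<close>)
  show "\<And>\<mu>. adj_eigenvalue V E \<mu> \<Longrightarrow> \<mu> \<le> spectral_radius V E" using allle sr by simp
  show "\<And>x. rq V E x \<le> spectral_radius V E * nq V x" using le sr by simp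
qed

locale gs =
  fixes V :: "'a set" and E :: "'a set set" and y :: "'a \<Rightarrow> real" and lam :: real
  assumes G: "simple_graph V E"
    and eig: "\<And>v. v \<in> V \<Longrightarrow> (\<Sum>w\<in>V. adj E v w * y w) = lam * y v"
    and ynn: "\<And>v. 0 \<le> y v"
    and yle: "\<And>v. v \<in> V \<Longrightarrow> y v \<le> 1"
begin

definition N :: "'a \<Rightarrow> 'a set" where "N v = {w\<in>V. {v,w} \<in> E}"
definition dg :: "'a set \<Rightarrow> 'a \<Rightarrow> real" where "dg X v = (\<Sum>w\<in>X. adj E v w)"

lemma fin: "finite V" using G by (simp add: simple_graph_def)
lemma N_sub: "N v \<subseteq> V" by (auto simp: N_def)
lemma finN: "finite (N v)" using fin N_sub finite_subset by blast
lemma finsub: "X \<subseteq> V \<Longrightarrow> finite X" using fin finite_subset by blast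

lemma edge_card: "e \<in> E \<Longrightarrow> card e = 2 \<and> e \<subseteq> V" using G by (simp add: simple_graph_def)

lemma edge_V: "{v,w} \<in> E \<Longrightarrow> v \<in> V \<and> w \<in> V" using edge_card by blast
lemma edge_ne: "{v,w} \<in> E \<Longrightarrow> v \<noteq> w" using edge_card by fastforce

lemma N_iff: "w \<in> N v \<longleftrightarrow> {v,w} \<in> E" using edge_V by (auto simp: N_def)
lemma N_sym: "w \<in> N v \<longleftrightarrow> v \<in> N w" by (simp add: N_iff insert_commute)
lemma N_irr: "v \<notin> N v" using edge_card[of "{v}"] by (auto simp: N_iff)
lemma adj_N: "adj E v w = (if w \<in> N v then 1 else 0)" by (simp add: adj_def N_iff)

lemma sum_adj: "X \<subseteq> V \<Longrightarrow> (\<Sum>w\<in>X. adj E v w * f w) = (\<Sum>w\<in>X \<inter> N v. f w)"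
proof -
  assume X: "X \<subseteq> V"
  have "(\<Sum>w\<in>X. adj E v w * f w) = (\<Sum>w\<in>X. if w \<in> N v then f w else 0)"
    by (intro sum.cong) (auto simp: adj_N)
  also have "\<dots> = (\<Sum>w\<in>X \<inter> N v. f w)"
    using finsub[OF X] by (simp add: sum.If_cases Int_def)
  finally show ?thesis .
qed

lemma dg_card: "X \<subseteq> V \<Longrightarrow> dg X v = real (card (X \<inter> N v))"
  using sum_adj[of X v "\<lambda>_. 1"] by (simp add: dg_def)

lemma dg_nonneg: "0 \<le> dg X v" by (simp add: dg_def sum_nonneg adj_nonneg)

lemma eigN: "v \<in> V \<Longrightarrow> (\<Sum>w\<in>N v. y w) = lam * y v"
  using eig[of v] sum_adj[of V v y] N_sub by (simp add: Int_absorb1)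

lemma swap:
  fixes f :: "'a \<Rightarrow> 'a \<Rightarrow> real"
  assumes "X \<subseteq> V" "Y \<subseteq> V"
  shows "(\<Sum>w\<in>X. \<Sum>z\<in>Y \<inter> N w. f w z) = (\<Sum>z\<in>Y. \<Sum>w\<in>X \<inter> N z. f w z)"
proof -
  have "(\<Sum>w\<in>X. \<Sum>z\<in>Y \<inter> N w. f w z) = (\<Sum>w\<in>X. \<Sum>z\<in>Y. adj E w z * f w z)"
    using assms by (simp add: sum_adj)
  also have "\<dots> = (\<Sum>z\<in>Y. \<Sum>w\<in>X. adj E z w * f w z)"
    by (subst sum.swap) (simp add: adj_sym)
  also have "\<dots> = (\<Sum>z\<in>Y. \<Sum>w\<in>X \<inter> N z. f w z)"
    using assms by (simp add: sum_adj)
  finally show ?thesis .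
qed

lemma handshake: "(\<Sum>v\<in>V. dg V v) = 2 * real (card E)"
proof -
  define P where "P = {p \<in> V \<times> V. {fst p, snd p} \<in> E}"
  have finP: "finite P" unfolding P_def using fin by auto
  have "(\<Sum>v\<in>V. dg V v) = (\<Sum>v\<in>V. real (card (N v)))"
    using N_sub by (simp add: dg_card Int_absorb1)
  also have "\<dots> = real (\<Sum>v\<in>V. card (N v))" by simp
  also have "(\<Sum>v\<in>V. card (N v)) = card (SIGMA v:V. N v)"
    using fin finN by (simp add: card_SigmaI)
  also have "(SIGMA v:V. N v) = P" unfolding P_def N_def by auto
  also have "P = (\<Union>e\<in>E. {p \<in> P. {fst p, snd p} = e})" unfolding P_def by auto
  also have "card \<dots> = (\<Sum>e\<in>E. card {p \<in> P. {fst p, snd p} = e})"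
  proof (rule card_UN_disjoint)
    show "finite E" using G fin unfolding simple_graph_def
      by (meson Pow_iff finite_Pow_iff finite_subset subsetI)
    show "\<forall>e\<in>E. finite {p \<in> P. {fst p, snd p} = e}" using finP by auto
  qed auto
  also have "\<dots> = (\<Sum>e\<in>E. 2)"
  proof (intro sum.cong refl)
    fix e assume e: "e \<in> E"
    then obtain a b where ab: "e = {a,b}" "a \<noteq> b" using edge_card[OF e] by (meson card_2_iff)
    have "a \<in> V" "b \<in> V" using edge_card[OF e] ab by auto
    then have "{p \<in> P. {fst p, snd p} = e} = {(a,b),(b,a)}"
    proof (intro equalityI subsetI)
      fix p assume "p \<in> {p \<in> P. {fst p, snd p} = e}"
      then have "{fst p, snd p} = {a,b}" using ab by simp
      then have "(fst p = a \<and> snd p = b) \<or> (fst p = b \<and> snd p = a)"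
        by (simp add: doubleton_eq_iff)
      then show "p \<in> {(a,b),(b,a)}" by (cases p) auto
    next
      fix p assume p: "p \<in> {(a,b),(b,a)}"
      have e1: "{a,b} \<in> E" "{b,a} \<in> E" using e ab by (simp_all add: insert_commute)
      show "p \<in> {p \<in> P. {fst p, snd p} = e}"
        using p e1 \<open>a \<in> V\<close> \<open>b \<in> V\<close> ab(1) unfolding P_def
        by (auto simp: insert_commute)
    qed
    then show "card {p \<in> P. {fst p, snd p} = e} = 2" using ab by simp
  qed
  finally show ?thesis by simp
qed


definition A :: "'a \<Rightarrow> 'a set" where "A u = N u"
definition B :: "'a \<Rightarrow> 'a set" where "B u = V - insert u (N u)"
definition psi :: "'a \<Rightarrow> 'a \<Rightarrow> real" where
  "psi u z = dg (A u) z / 2 - (dg (A u) z - 1) * y z"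
definition chi :: "'a \<Rightarrow> 'a \<Rightarrow> real" where
  "chi u z = dg (A u) z * (1 - y z) + dg (B u) z / 2"
definition S :: "'a \<Rightarrow> real" where
  "S u = (\<Sum>z\<in>A u. psi u z) + (\<Sum>z\<in>B u. chi u z)"

lemma A_sub: "A u \<subseteq> V" by (simp add: A_def N_sub)
lemma B_sub: "B u \<subseteq> V" by (auto simp: B_def)
lemma finA: "finite (A u)" using finsub[OF A_sub] .
lemma finB: "finite (B u)" using finsub[OF B_sub] .
lemma AB_disj: "A u \<inter> B u = {}" by (auto simp: A_def B_def)
lemma uA: "u \<notin> A u" by (simp add: A_def N_irr)
lemma uB: "u \<notin> B u" by (simp add: B_def)
lemma V_split: "u \<in> V \<Longrightarrow> V = insert u (A u \<union> B u)"
  using N_sub by (auto simp: A_def B_def)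

lemma sum_split:
  fixes f :: "'a \<Rightarrow> real"
  assumes u: "u \<in> V"
  shows "(\<Sum>v\<in>V. f v) = f u + (\<Sum>v\<in>A u. f v) + (\<Sum>v\<in>B u. f v)"
proof -
  have "(\<Sum>v\<in>V. f v) = (\<Sum>v\<in>insert u (A u \<union> B u). f v)" using V_split[OF u] by simp
  also have "\<dots> = f u + (\<Sum>v\<in>A u \<union> B u. f v)"
    using finA finB uA uB by (subst sum.insert) auto
  also have "(\<Sum>v\<in>A u \<union> B u. f v) = (\<Sum>v\<in>A u. f v) + (\<Sum>v\<in>B u. f v)"
    using finA finB AB_disj by (rule sum.union_disjoint)
  finally show ?thesis by simp
qed

lemma adj_uA: "w \<in> A u \<Longrightarrow> adj E w u = 1"
  by (simp add: adj_N A_def N_sym)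
lemma adj_uB: "z \<in> B u \<Longrightarrow> adj E z u = 0"
  by (auto simp: adj_N B_def N_sym)

lemma lamA: "u \<in> V \<Longrightarrow> y u = 1 \<Longrightarrow> lam = (\<Sum>w\<in>A u. y w)"
  using eigN[of u] by (simp add: A_def)

lemma eig_split: "u \<in> V \<Longrightarrow> w \<in> V \<Longrightarrow>
   lam * y w = adj E w u * y u + (\<Sum>z\<in>A u. adj E w z * y z) + (\<Sum>z\<in>B u. adj E w z * y z)"
  using eig[of w] sum_split[of u "\<lambda>z. adj E w z * y z"] by simp

lemma dgV_split: "u \<in> V \<Longrightarrow> dg V w = adj E w u + dg (A u) w + dg (B u) w"
  unfolding dg_def using sum_split[of u "\<lambda>z. adj E w z"] by simp

lemma edges_u:
  assumes u: "u \<in> V"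
  shows "2 * real (card E) = 2 * real (card (A u)) + (\<Sum>z\<in>A u. dg (A u) z)
       + 2 * (\<Sum>z\<in>B u. dg (A u) z) + (\<Sum>z\<in>B u. dg (B u) z)"
proof -
    have "2 * real (card E) = dg V u + (\<Sum>w\<in>A u. dg V w) + (\<Sum>z\<in>B u. dg V z)"
      using handshake sum_split[OF u, of "dg V"] by simp
    also have "dg V u = real (card (A u))"
      using dg_card[of V u] N_sub by (simp add: A_def Int_absorb1)
    also have "(\<Sum>w\<in>A u. dg V w) = (\<Sum>w\<in>A u. 1 + dg (A u) w + dg (B u) w)"
      using dgV_split[OF u] adj_uA by (intro sum.cong) auto
    also have "(\<Sum>z\<in>B u. dg V z) = (\<Sum>z\<in>B u. dg (A u) z + dg (B u) z)"
      using dgV_split[OF u] adj_uB by (intro sum.cong) auto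
    finally have h: "2 * real (card E) = real (card (A u)) + (\<Sum>w\<in>A u. 1 + dg (A u) w + dg (B u) w)
      + (\<Sum>z\<in>B u. dg (A u) z + dg (B u) z)" .
    have sw: "(\<Sum>w\<in>A u. dg (B u) w) = (\<Sum>z\<in>B u. dg (A u) z)"
      unfolding dg_def by (subst sum.swap) (simp add: adj_sym)
    show ?thesis using h sw by (simp add: sum.distrib)
qed

lemma ident:
  assumes u: "u \<in> V" and yu: "y u = 1"
  shows "lam^2 - lam = real (card E) - S u"
proof -
  have l1: "lam = (\<Sum>w\<in>A u. y w)" by (rule lamA[OF u yu])
  have l2: "lam^2 = real (card (A u)) + (\<Sum>z\<in>A u. dg (A u) z * y z) + (\<Sum>z\<in>B u. dg (A u) z * y z)"
  proof -
    have "lam^2 = (\<Sum>w\<in>A u. lam * y w)" using l1 by (simp add: power2_eq_square sum_distrib_left)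
    also have "\<dots> = (\<Sum>w\<in>A u. 1 + (\<Sum>z\<in>A u. adj E w z * y z) + (\<Sum>z\<in>B u. adj E w z * y z))"
    proof (intro sum.cong refl)
      fix w assume w: "w \<in> A u"
      then have "w \<in> V" using A_sub by blast
      then show "lam * y w = 1 + (\<Sum>z\<in>A u. adj E w z * y z) + (\<Sum>z\<in>B u. adj E w z * y z)"
        using eig_split[OF u] adj_uA[OF w] yu by simp
    qed
    also have "\<dots> = real (card (A u)) + (\<Sum>w\<in>A u. \<Sum>z\<in>A u. adj E w z * y z)
                  + (\<Sum>w\<in>A u. \<Sum>z\<in>B u. adj E w z * y z)"
      by (simp add: sum.distrib)
    also have "(\<Sum>w\<in>A u. \<Sum>z\<in>A u. adj E w z * y z) = (\<Sum>z\<in>A u. dg (A u) z * y z)"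
      unfolding dg_def sum_distrib_right by (subst sum.swap) (simp add: adj_sym)
    also have "(\<Sum>w\<in>A u. \<Sum>z\<in>B u. adj E w z * y z) = (\<Sum>z\<in>B u. dg (A u) z * y z)"
      unfolding dg_def sum_distrib_right by (subst sum.swap) (simp add: adj_sym)
    finally show ?thesis .
  qed
  have l3: "2 * real (card E) = 2 * real (card (A u)) + (\<Sum>z\<in>A u. dg (A u) z)
       + 2 * (\<Sum>z\<in>B u. dg (A u) z) + (\<Sum>z\<in>B u. dg (B u) z)"
  proof -
    have "2 * real (card E) = dg V u + (\<Sum>w\<in>A u. dg V w) + (\<Sum>z\<in>B u. dg V z)"
      using handshake sum_split[OF u, of "dg V"] by simp
    also have "dg V u = real (card (A u))"
      using dg_card[of V u] N_sub by (simp add: A_def Int_absorb1)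
    also have "(\<Sum>w\<in>A u. dg V w) = (\<Sum>w\<in>A u. 1 + dg (A u) w + dg (B u) w)"
      using dgV_split[OF u] adj_uA by (intro sum.cong) auto
    also have "(\<Sum>z\<in>B u. dg V z) = (\<Sum>z\<in>B u. dg (A u) z + dg (B u) z)"
      using dgV_split[OF u] adj_uB by (intro sum.cong) auto
    finally have h: "2 * real (card E) = real (card (A u)) + (\<Sum>w\<in>A u. 1 + dg (A u) w + dg (B u) w)
      + (\<Sum>z\<in>B u. dg (A u) z + dg (B u) z)" .
    have sw: "(\<Sum>w\<in>A u. dg (B u) w) = (\<Sum>z\<in>B u. dg (A u) z)"
      unfolding dg_def by (subst sum.swap) (simp add: adj_sym)
    show ?thesis using h sw by (simp add: sum.distrib)
  qed
  show ?thesis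
    unfolding S_def psi_def chi_def
    using l1 l2 l3
    by (simp add: sum.distrib sum_subtractf sum_divide_distrib[symmetric] algebra_simps)
qed

end

locale g5 = gs +
  assumes nov5: "\<not> contains_subgraph fan5_V fan5_E V E"
begin

lemma fan:
  assumes e: "{c,p1} \<in> E" "{c,p2} \<in> E" "{c,p3} \<in> E" "{c,p4} \<in> E"
     "{p1,p2} \<in> E" "{p2,p3} \<in> E" "{p3,p4} \<in> E"
    and d: "p1 \<noteq> p3" "p1 \<noteq> p4" "p2 \<noteq> p4"
  shows False
proof -
  have ne: "c \<noteq> p1" "c \<noteq> p2" "c \<noteq> p3" "c \<noteq> p4" "p1 \<noteq> p2" "p2 \<noteq> p3" "p3 \<noteq> p4"
    using e edge_ne by blast+
  have inV: "c \<in> V" "p1 \<in> V" "p2 \<in> V" "p3 \<in> V" "p4 \<in> V" using e edge_V by blast+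
  define f where "f = (\<lambda>i::nat. if i = 0 then c else if i = 1 then p1 else if i = 2 then p2
                          else if i = 3 then p3 else p4)"
  have "contains_subgraph fan5_V fan5_E V E"
    unfolding contains_subgraph_def
  proof (intro exI[of _ f] conjI)
    show "inj_on f fan5_V" unfolding fan5_V_def inj_on_def f_def
      using ne d by auto
    show "f ` fan5_V \<subseteq> V" unfolding fan5_V_def f_def using inV by auto
    show "\<forall>e\<in>fan5_E. f ` e \<in> E" unfolding fan5_E_def f_def using e by (auto simp: insert_commute)
  qed
  then show False using nov5 by simp
qed

definition NA :: "'a \<Rightarrow> 'a \<Rightarrow> 'a set" where "NA u z = A u \<inter> N z"

lemma finNA: "finite (NA u z)" unfolding NA_def using finA by simp

lemma dgA: "dg (A u) z = real (card (NA u z))"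
  using dg_card[OF A_sub] by (simp add: NA_def)

lemma NA_sym: "w \<in> NA u z \<Longrightarrow> z \<in> A u \<Longrightarrow> z \<in> NA u w"
  by (auto simp: NA_def N_sym)

lemma NA_uN: "w \<in> A u \<Longrightarrow> {u,w} \<in> E" by (simp add: A_def N_iff)

lemma p4_aux:
  assumes z: "z \<in> A u" and w: "w \<in> A u" and b: "b \<in> NA u z" and a: "a \<in> NA u w"
    and bw: "b \<noteq> w" and az: "a \<noteq> z" and wz: "w \<in> N z"
  shows "b = a"
proof (rule ccontr)
  assume ba: "b \<noteq> a"
  have bA: "b \<in> A u" and aA: "a \<in> A u" using a b by (auto simp: NA_def)
  show False
  proof (rule fan[of u b z w a])
    show "{u,b} \<in> E" "{u,z} \<in> E" "{u,w} \<in> E" "{u,a} \<in> E" using bA z w aA NA_uN by auto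
    show "{b,z} \<in> E" using b by (auto simp: NA_def N_iff insert_commute)
    show "{z,w} \<in> E" using wz by (simp add: N_iff)
    show "{w,a} \<in> E" using a by (simp add: NA_def N_iff)
    show "b \<noteq> w" "b \<noteq> a" by fact+
    show "z \<noteq> a" using az by simp
  qed
qed

definition tri :: "'a \<Rightarrow> 'a \<Rightarrow> bool" where
  "tri u z \<longleftrightarrow> (\<exists>a b. a \<noteq> b \<and> NA u z = {a,b} \<and> {a,b} \<in> E \<and> NA u a = {z,b} \<and> NA u b = {z,a})"

lemma card_ge2: "finite X \<Longrightarrow> card X \<ge> 2 \<Longrightarrow> x \<in> X \<Longrightarrow> \<exists>y\<in>X. y \<noteq> x"
proof (rule ccontr)
  assume f: "finite X" and c: "card X \<ge> 2" and x: "x \<in> X" and n: "\<not> (\<exists>y\<in>X. y \<noteq> x)"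
  then have "X \<subseteq> {x}" by blast
  then have "card X \<le> card {x}" using card_mono[of "{x}" X] by simp
  then show False using c by simp
qed

lemma p4:
  assumes z: "z \<in> A u" and w: "w \<in> NA u z"
    and cz: "card (NA u z) \<ge> 2" and cw: "card (NA u w) \<ge> 2"
  shows "\<exists>a. a \<noteq> z \<and> a \<noteq> w \<and> NA u z = {w,a} \<and> NA u w = {z,a} \<and> NA u a = {z,w} \<and> {w,a} \<in> E"
proof -
  have wA: "w \<in> A u" and wz: "w \<in> N z" using w by (auto simp: NA_def)
  have zw: "z \<in> NA u w" using NA_sym[OF w z] .
  obtain a where a: "a \<in> NA u w" "a \<noteq> z" using card_ge2[OF finNA cw zw] by blast
  obtain b where b: "b \<in> NA u z" "b \<noteq> w" using card_ge2[OF finNA cz w] by blast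
  have key: "\<And>b' a'. b' \<in> NA u z \<Longrightarrow> a' \<in> NA u w \<Longrightarrow> b' \<noteq> w \<Longrightarrow> a' \<noteq> z \<Longrightarrow> b' = a'"
    using p4_aux[OF z wA _ _ _ _ wz] by blast
  have ba: "b = a" using key[OF b(1) a(1) b(2) a(2)] .
  have aA: "a \<in> A u" using a by (simp add: NA_def)
  have aw: "a \<noteq> w" using a N_irr by (auto simp: NA_def)
  have NAz: "NA u z = {w,a}"
  proof
    show "NA u z \<subseteq> {w,a}" using key[OF _ a(1) _ a(2)] by blast
    show "{w,a} \<subseteq> NA u z" using w b ba by auto
  qed
  have NAw: "NA u w = {z,a}"
  proof
    show "NA u w \<subseteq> {z,a}" using key[OF b(1) _ b(2)] ba by blast
    show "{z,a} \<subseteq> NA u w" using zw a by auto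
  qed
  have NAa: "NA u a = {z,w}"
  proof
    show "NA u a \<subseteq> {z,w}"
    proof
      fix c assume c: "c \<in> NA u a"
      show "c \<in> {z,w}"
      proof (rule ccontr)
        assume cn: "c \<notin> {z,w}"
        have cA: "c \<in> A u" using c by (simp add: NA_def)
        show False
        proof (rule fan[of u c a z w])
          show "{u,c} \<in> E" "{u,a} \<in> E" "{u,z} \<in> E" "{u,w} \<in> E" using cA aA z wA NA_uN by auto
          show "{c,a} \<in> E" using c by (auto simp: NA_def N_iff insert_commute)
          have "a \<in> N z" using NAz by (auto simp: NA_def)
          then show "{a,z} \<in> E" by (simp add: N_iff insert_commute)
          show "{z,w} \<in> E" using wz by (simp add: N_iff)
          show "c \<noteq> z" "c \<noteq> w" using cn by auto
          show "a \<noteq> w" by fact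
        qed
      qed
    qed
    show "{z,w} \<subseteq> NA u a" using NA_sym[OF _ z, of a] NA_sym[OF _ wA, of a] NAz NAw by auto
  qed
  have "{w,a} \<in> E" using a by (simp add: NA_def N_iff)
  then show ?thesis using a(2) aw NAz NAw NAa by blast
qed

lemma p4_tri:
  assumes z: "z \<in> A u" and w: "w \<in> NA u z"
    and cz: "card (NA u z) \<ge> 2" and cw: "card (NA u w) \<ge> 2"
  shows "tri u z"
proof -
  obtain a where a: "a \<noteq> z" "a \<noteq> w" "NA u z = {w,a}" "NA u w = {z,a}" "NA u a = {z,w}" "{w,a} \<in> E"
    using p4[OF assms] by blast
  show ?thesis unfolding tri_def
    by (rule exI[of _ w], rule exI[of _ a]) (use a in auto)
qed

end

context g5 begin

definition lf :: "'a \<Rightarrow> 'a \<Rightarrow> real" where "lf u w = (if card (NA u w) = 1 then 1 else 0)"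
definition phi :: "'a \<Rightarrow> 'a \<Rightarrow> real" where
  "phi u z = psi u z + (\<Sum>w\<in>NA u z. lf u w - lf u z) / 2"

lemma sum_phi: "(\<Sum>z\<in>A u. phi u z) = (\<Sum>z\<in>A u. psi u z)"
proof -
  have "(\<Sum>z\<in>A u. \<Sum>w\<in>A u \<inter> N z. lf u w) = (\<Sum>w\<in>A u. \<Sum>z\<in>A u \<inter> N w. lf u w)"
    using swap[OF A_sub A_sub, of "\<lambda>z w. lf u w"] .
  then have "(\<Sum>z\<in>A u. \<Sum>w\<in>NA u z. lf u w - lf u z) = 0"
    unfolding NA_def by (simp add: sum_subtractf)
  then show ?thesis unfolding phi_def by (simp add: sum.distrib sum_divide_distrib[symmetric])
qed

lemma phi_formula:
  "phi u z = real (card (NA u z)) / 2 - (real (card (NA u z)) - 1) * y z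
     + ((\<Sum>w\<in>NA u z. lf u w) - real (card (NA u z)) * lf u z) / 2"
  unfolding phi_def psi_def dgA by (simp add: sum_subtractf)

lemma NA_A: "NA u z \<subseteq> A u" by (simp add: NA_def)
lemma NA_irr: "z \<notin> NA u z" by (simp add: NA_def N_irr)

lemma cls:
  assumes z: "z \<in> A u"
  shows "card (NA u z) = 0 \<or> card (NA u z) = 1 \<or>
         (card (NA u z) \<ge> 2 \<and> (\<forall>w\<in>NA u z. card (NA u w) = 1)) \<or> tri u z"
proof -
  { assume c2: "card (NA u z) \<ge> 2" and ex: "\<exists>w\<in>NA u z. card (NA u w) \<noteq> 1"
    then obtain w where w: "w \<in> NA u z" "card (NA u w) \<noteq> 1" by blast
    have "z \<in> NA u w" using NA_sym[OF w(1) z] .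
    then have "card (NA u w) \<ge> 1" using finNA by (metis One_nat_def Suc_leI card_gt_0_iff empty_iff)
    then have "card (NA u w) \<ge> 2" using w(2) by simp
    then have "tri u z" using p4_tri[OF z w(1) c2] by simp }
  then show ?thesis
  proof (cases "card (NA u z) \<ge> 2")
    case False then show ?thesis by linarith
  qed blast
qed

lemma tri_facts:
  assumes "tri u z"
  obtains a b where "a \<noteq> b" "NA u z = {a,b}" "{a,b} \<in> E" "NA u a = {z,b}" "NA u b = {z,a}"
    "z \<noteq> a" "z \<noteq> b" "card (NA u z) = 2" "card (NA u a) = 2" "card (NA u b) = 2"
proof -
  obtain a b where ab: "a \<noteq> b" "NA u z = {a,b}" "{a,b} \<in> E" "NA u a = {z,b}" "NA u b = {z,a}"
    using assms unfolding tri_def by blast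
  have za: "z \<noteq> a" "z \<noteq> b" using ab(2) NA_irr[of z u] by auto
  show ?thesis by (rule that[OF ab za]) (use ab za in auto)
qed

lemma phi0: "card (NA u z) = 0 \<Longrightarrow> phi u z = y z"
  using finNA by (simp add: phi_formula lf_def)

lemma phi1: "NA u z = {w} \<Longrightarrow> phi u z = lf u w / 2"
  by (simp add: phi_formula lf_def)

lemma phis:
  assumes "card (NA u z) \<ge> 2" "\<forall>w\<in>NA u z. card (NA u w) = 1"
  shows "phi u z = real (card (NA u z)) - (real (card (NA u z)) - 1) * y z"
proof -
  have "(\<Sum>w\<in>NA u z. lf u w) = real (card (NA u z))" using assms(2) by (simp add: lf_def)
  then show ?thesis using assms(1) by (simp add: phi_formula lf_def)
qed

lemma phit:
  assumes "tri u z"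
  shows "phi u z = 1 - y z"
proof -
  obtain a b where ab: "a \<noteq> b" "NA u z = {a,b}" "card (NA u a) = 2" "card (NA u b) = 2"
    "card (NA u z) = 2"
    using tri_facts[OF assms] by metis
  have "(\<Sum>w\<in>NA u z. lf u w) = 0" using ab by (simp add: lf_def)
  then show ?thesis using ab by (simp add: phi_formula lf_def)
qed

lemma lf01: "0 \<le> lf u w" "lf u w \<le> 1" by (simp_all add: lf_def)

lemma phi_nonneg:
  assumes z: "z \<in> A u" and zV: "y z \<le> 1"
  shows "0 \<le> phi u z"
proof -
  consider (c0) "card (NA u z) = 0" | (c1) "card (NA u z) = 1"
    | (cs) "card (NA u z) \<ge> 2" "\<forall>w\<in>NA u z. card (NA u w) = 1" | (ct) "tri u z"
    using cls[OF z] by auto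
  then show ?thesis
  proof cases
    case c0 then show ?thesis using phi0 ynn by simp
  next
    case c1
    then obtain w where "NA u z = {w}" by (meson card_1_singletonE)
    then have "phi u z = lf u w / 2" by (rule phi1)
    then show ?thesis using lf01[of u w] by simp
  next
    case cs
    have "(real (card (NA u z)) - 1) * y z \<le> (real (card (NA u z)) - 1) * 1"
      using cs zV by (intro mult_left_mono) auto
    then show ?thesis using phis[OF cs] by simp
  next
    case ct then show ?thesis using phit zV by simp
  qed
qed

lemma phis_ge1:
  assumes "card (NA u z) \<ge> 2" "\<forall>w\<in>NA u z. card (NA u w) = 1" "y z \<le> 1"
  shows "1 \<le> phi u z"
proof -
  have "(real (card (NA u z)) - 1) * y z \<le> (real (card (NA u z)) - 1) * 1"
    using assms by (intro mult_left_mono) auto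
  then show ?thesis using phis[OF assms(1,2)] by simp
qed

definition caseA :: "'a \<Rightarrow> bool" where
  "caseA u \<longleftrightarrow> (\<exists>z\<in>A u. card (NA u z) \<ge> 1 \<and> \<not> tri u z)"

lemma sum_ge_sub:
  fixes f :: "'a \<Rightarrow> real"
  assumes "finite X" "Y \<subseteq> X" "\<And>x. x \<in> X \<Longrightarrow> 0 \<le> f x"
  shows "(\<Sum>x\<in>Y. f x) \<le> (\<Sum>x\<in>X. f x)"
  by (rule sum_mono2) (use assms in auto)

lemma star_nbr:
  assumes z: "z \<in> A u" and w: "NA u z = {w}" and cw: "card (NA u w) \<noteq> 1"
  shows "card (NA u w) \<ge> 2 \<and> (\<forall>v\<in>NA u w. card (NA u v) = 1)"
proof -
  have wN: "w \<in> NA u z" using w by simp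
  have wA: "w \<in> A u" using wN NA_A by blast
  have zw: "z \<in> NA u w" using NA_sym[OF wN z] .
  have c1: "card (NA u w) \<ge> 1" using zw finNA by (metis One_nat_def Suc_leI card_gt_0_iff empty_iff)
  then have c2: "card (NA u w) \<ge> 2" using cw by simp
  have "\<not> tri u w"
  proof
    assume "tri u w"
    then obtain a b where "NA u w = {a,b}" "card (NA u a) = 2" "card (NA u b) = 2" by (rule tri_facts)
    then show False using zw w by auto
  qed
  then show ?thesis using cls[OF wA] c2 by auto
qed

lemma sumphi_ge1:
  assumes u: "u \<in> V" and cA: "caseA u"
  shows "1 \<le> (\<Sum>z\<in>A u. phi u z)"
proof -
  have nn: "\<And>x. x \<in> A u \<Longrightarrow> 0 \<le> phi u x" using phi_nonneg yle A_sub by blast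
  obtain z where z: "z \<in> A u" "card (NA u z) \<ge> 1" "\<not> tri u z" using cA caseA_def by blast
  have ylez: "y z \<le> 1" using yle z(1) A_sub by blast
  consider (c1) "card (NA u z) = 1" | (cs) "card (NA u z) \<ge> 2" "\<forall>w\<in>NA u z. card (NA u w) = 1"
    using cls[OF z(1)] z(2,3) by auto
  then show ?thesis
  proof cases
    case cs
    have "1 \<le> phi u z" using phis_ge1[OF cs ylez] .
    also have "phi u z \<le> (\<Sum>z\<in>A u. phi u z)"
      using sum_ge_sub[OF finA _ nn, of "{z}"] z(1) by simp
    finally show ?thesis .
  next
    case c1
    then obtain w where w: "NA u z = {w}" by (meson card_1_singletonE)
    have wN: "w \<in> NA u z" using w by simp
    have wA: "w \<in> A u" using wN NA_A by blast
    have zw: "z \<in> NA u w" using NA_sym[OF wN z(1)] .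
    have ylew: "y w \<le> 1" using yle wA A_sub by blast
    show ?thesis
    proof (cases "card (NA u w) = 1")
      case True
      then have Nw: "NA u w = {z}" using zw by (metis card_1_singletonE singletonD)
      have pz: "phi u z = 1/2" using phi1[OF w] True by (simp add: lf_def)
      have pw: "phi u w = 1/2" using phi1[OF Nw] c1 by (simp add: lf_def)
      have zw': "z \<noteq> w" using wN NA_irr by blast
      have "1 = (\<Sum>x\<in>{z,w}. phi u x)" using pz pw zw' by simp
      also have "\<dots> \<le> (\<Sum>x\<in>A u. phi u x)"
        using sum_ge_sub[OF finA _ nn, of "{z,w}"] z(1) wA by simp
      finally show ?thesis .
    next
      case False
      have "1 \<le> phi u w" using phis_ge1 star_nbr[OF z(1) w False] ylew by blast
      also have "phi u w \<le> (\<Sum>x\<in>A u. phi u x)"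
        using sum_ge_sub[OF finA _ nn, of "{w}"] wA by simp
      finally show ?thesis .
    qed
  qed
qed

lemma chi_nonneg: "z \<in> B u \<Longrightarrow> 0 \<le> chi u z"
  using yle[of z] B_sub dg_nonneg[of "A u" z] dg_nonneg[of "B u" z]
  unfolding chi_def by (intro add_nonneg_nonneg mult_nonneg_nonneg) auto

lemma S_eq_phi: "S u = (\<Sum>z\<in>A u. phi u z) + (\<Sum>z\<in>B u. chi u z)"
  by (simp add: S_def sum_phi)

lemma S_ge1: "u \<in> V \<Longrightarrow> caseA u \<Longrightarrow> 1 \<le> S u"
  using sumphi_ge1[of u] sum_nonneg[of "B u" "chi u"] chi_nonneg S_eq_phi by fastforce

end

context g5 begin

lemma tri_nbr:
  assumes t: "tri u z" and w: "w \<in> NA u z"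
  shows "tri u w"
proof -
  obtain a b where ab: "a \<noteq> b" "NA u z = {a,b}" "{a,b} \<in> E" "NA u a = {z,b}" "NA u b = {z,a}"
    "z \<noteq> a" "z \<noteq> b" using tri_facts[OF t] by metis
  have zb: "{z,b} \<in> E" "{z,a} \<in> E" using ab(2) by (auto simp: NA_def N_iff)
  show ?thesis
  proof (cases "w = a")
    case True
    show ?thesis unfolding tri_def True
      by (rule exI[of _ z], rule exI[of _ b]) (use ab zb in \<open>auto simp: insert_commute\<close>)
  next
    case False
    then have wb: "w = b" using w ab by auto
    show ?thesis unfolding tri_def wb
      by (rule exI[of _ z], rule exI[of _ a]) (use ab zb in \<open>auto simp: insert_commute\<close>)
  qed
qed

lemma k4:
  assumes p: "p \<in> A u" and q: "q \<in> A u" and r: "r \<in> A u"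
    and pq: "{p,q} \<in> E" and qr: "{q,r} \<in> E" and pr: "{p,r} \<in> E"
    and x: "x \<in> B u" and xp: "{x,p} \<in> E" and xq: "{x,q} \<in> E"
  shows False
proof (rule fan[of p x q u r])
  have uE: "{u,p} \<in> E" "{u,q} \<in> E" "{u,r} \<in> E" using p q r NA_uN by auto
  show "{p,x} \<in> E" "{p,q} \<in> E" "{p,u} \<in> E" "{p,r} \<in> E"
    using xp pq uE pr by (auto simp: insert_commute)
  show "{x,q} \<in> E" by fact
  show "{q,u} \<in> E" using uE by (simp add: insert_commute)
  show "{u,r} \<in> E" using uE by simp
  show "x \<noteq> u" using x uB by blast
  show "x \<noteq> r" using x r AB_disj by blast
  show "q \<noteq> r" using qr edge_ne by blast
qed

lemma dgT_le1:
  assumes a: "a \<in> A u" and b: "b \<in> A u" and c: "c \<in> A u"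
    and ab: "{a,b} \<in> E" and bc: "{b,c} \<in> E" and ac: "{a,c} \<in> E"
    and x: "x \<in> B u"
  shows "dg {a,b,c} x \<le> 1"
proof -
  have d: "a \<noteq> b" "b \<noteq> c" "a \<noteq> c" using ab bc ac edge_ne by blast+
  have xa: "\<not> ({x,a} \<in> E \<and> {x,b} \<in> E)" using k4[OF a b c ab bc ac x] by blast
  have xb: "\<not> ({x,b} \<in> E \<and> {x,c} \<in> E)"
    using k4[OF b c a bc _ _ x] ac ab by (auto simp: insert_commute)
  have xc: "\<not> ({x,a} \<in> E \<and> {x,c} \<in> E)"
    using k4[OF a c b ac _ ab x] bc by (auto simp: insert_commute)
  show ?thesis unfolding dg_def using d xa xb xc by (auto simp: adj_def)
qed

end

context g5 begin

lemma eigA: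
  assumes u: "u \<in> V" and yu: "y u = 1" and k: "k \<in> A u"
  shows "lam * y k = 1 + (\<Sum>w\<in>NA u k. y w) + (\<Sum>x\<in>B u. adj E k x * y x)"
proof -
  have kV: "k \<in> V" using k A_sub by blast
  have "(\<Sum>w\<in>A u. adj E k w * y w) = (\<Sum>w\<in>NA u k. y w)"
    using sum_adj[OF A_sub] by (simp add: NA_def)
  then show ?thesis using eig_split[OF u kV] adj_uA[OF k] yu by simp
qed

lemma eigB_le:
  assumes u: "u \<in> V" and x: "x \<in> B u"
  shows "lam * y x \<le> dg (A u) x + dg (B u) x"
proof -
  have xV: "x \<in> V" using x B_sub by blast
  have "lam * y x = (\<Sum>z\<in>A u. adj E x z * y z) + (\<Sum>z\<in>B u. adj E x z * y z)"
    using eig_split[OF u xV] adj_uB[OF x] by simp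
  also have "(\<Sum>z\<in>A u. adj E x z * y z) \<le> (\<Sum>z\<in>A u. adj E x z)"
    using yle A_sub by (intro sum_mono) (auto intro!: mult_left_le simp: adj_nonneg)
  also have "(\<Sum>z\<in>B u. adj E x z * y z) \<le> (\<Sum>z\<in>B u. adj E x z)"
    using yle B_sub by (intro sum_mono) (auto intro!: mult_left_le simp: adj_nonneg)
  finally show ?thesis by (simp add: dg_def)
qed

lemma dg_union: "X \<inter> Y = {} \<Longrightarrow> finite X \<Longrightarrow> finite Y \<Longrightarrow> dg (X \<union> Y) v = dg X v + dg Y v"
  unfolding dg_def by (rule sum.union_disjoint)

lemma dg_nat: "X \<subseteq> V \<Longrightarrow> \<exists>k::nat. dg X v = real k"
  using dg_card by blast

lemma sum_dg_nat: "X \<subseteq> V \<Longrightarrow> \<exists>k::nat. (\<Sum>x\<in>Y. dg X x) = real k"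
proof -
  assume X: "X \<subseteq> V"
  have "(\<Sum>x\<in>Y. dg X x) = real (\<Sum>x\<in>Y. card (X \<inter> N x))"
    using dg_card[OF X] by simp
  then show ?thesis by blast
qed

end

context g5 begin

lemma I0_of:
  assumes nA: "\<not> caseA u" and w: "w \<in> A u" and nt: "\<not> tri u w"
  shows "NA u w = {}"
proof -
  have "\<not> (card (NA u w) \<ge> 1)" using nA w nt unfolding caseA_def by blast
  then have "card (NA u w) = 0" by simp
  then show ?thesis using finNA by simp
qed

lemma caseB2_false:
  assumes u: "u \<in> V" and yu: "y u = 1" and nA: "\<not> caseA u"
    and z: "z \<in> A u" and tz: "tri u z"
    and Trs: "\<And>w. w \<in> A u \<Longrightarrow> tri u w \<Longrightarrow> w \<in> insert z (NA u z)"
    and m8: "8 \<le> real (card E)" and H: "real (card E) - 1 \<le> lam^2 - lam"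
  shows False
proof -
  obtain a b where ab: "a \<noteq> b" "NA u z = {a,b}" "{a,b} \<in> E" "NA u a = {z,b}" "NA u b = {z,a}"
    "z \<noteq> a" "z \<noteq> b" using tri_facts[OF tz] by metis
  have aA: "a \<in> A u" and bA: "b \<in> A u" using ab(2) NA_A by blast+
  have zab: "{z,a} \<in> E" "{z,b} \<in> E" using ab(2) by (auto simp: NA_def N_iff)
  define T where "T = {z,a,b}"
  define I where "I = A u - T"
  have TA: "T \<subseteq> A u" using z aA bA T_def by auto
  have AT: "A u = T \<union> I" and TI: "T \<inter> I = {}" using TA I_def by auto
  have finI: "finite I" using finA I_def by simp
  have finT: "finite T" using T_def by simp
  have I0: "\<And>w. w \<in> I \<Longrightarrow> NA u w = {}"
  proof -
    fix w assume w: "w \<in> I"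
    then have wA: "w \<in> A u" using I_def by simp
    have "\<not> tri u w" using Trs[OF wA] w ab(2) by (auto simp: I_def T_def)
    then show "NA u w = {}" using I0_of[OF nA wA] by simp
  qed
  define \<beta> where "\<beta> k = (\<Sum>x\<in>B u. adj E k x * y x)" for k
  define YT where "YT = y z + y a + y b"
  define YI where "YI = (\<Sum>w\<in>I. y w)"
  define n where "n = real (card I)"
  define bT where "bT = \<beta> z + \<beta> a + \<beta> b"
  define bI where "bI = (\<Sum>w\<in>I. \<beta> w)"
  define r where "r = (\<Sum>x\<in>B u. dg T x)"
  define e where "e = (\<Sum>x\<in>B u. dg I x)"
  define eb where "eb = (\<Sum>x\<in>B u. dg (B u) x) / 2"
  define L where "L = lam"
  have Tsum: "\<And>f::'a \<Rightarrow> real. (\<Sum>x\<in>T. f x) = f z + f a + f b" using ab T_def by (simp add: add.assoc)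
  have Lsum: "L = YT + YI"
  proof -
    have "lam = (\<Sum>w\<in>A u. y w)" by (rule lamA[OF u yu])
    also have "\<dots> = (\<Sum>w\<in>T. y w) + (\<Sum>w\<in>I. y w)" unfolding AT using finT finI TI
      by (rule sum.union_disjoint)
    finally show ?thesis using Tsum YT_def YI_def L_def by simp
  qed
  have Ez: "L * y z = 1 + y a + y b + \<beta> z" using eigA[OF u yu z] ab by (simp add: \<beta>_def L_def)
  have Ea: "L * y a = 1 + y z + y b + \<beta> a" using eigA[OF u yu aA] ab by (simp add: \<beta>_def L_def)
  have Eb: "L * y b = 1 + y z + y a + \<beta> b" using eigA[OF u yu bA] ab by (simp add: \<beta>_def L_def add_ac)
  have ET: "L * YT = 3 + 2 * YT + bT" using Ez Ea Eb unfolding YT_def bT_def by (simp add: algebra_simps)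
  have EI: "L * YI = n + bI"
  proof -
    have "L * YI = (\<Sum>w\<in>I. L * y w)" by (simp add: YI_def sum_distrib_left)
    also have "\<dots> = (\<Sum>w\<in>I. 1 + \<beta> w)"
    proof (intro sum.cong refl)
      fix w assume w: "w \<in> I"
      then have wA: "w \<in> A u" using I_def by simp
      show "L * y w = 1 + \<beta> w" using eigA[OF u yu wA] I0[OF w] by (simp add: \<beta>_def L_def)
    qed
    finally show ?thesis by (simp add: sum.distrib n_def bI_def)
  qed
  have bT_eq: "bT = (\<Sum>x\<in>B u. dg T x * y x)"
    unfolding bT_def \<beta>_def dg_def using Tsum
    by (simp add: sum.distrib sum_distrib_right adj_sym algebra_simps)
  have bI_eq: "bI = (\<Sum>x\<in>B u. dg I x * y x)"
    unfolding bI_def \<beta>_def dg_def sum_distrib_right by (subst sum.swap) (simp add: adj_sym)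
  have dgA_split: "\<And>x. dg (A u) x = dg T x + dg I x"
    unfolding AT using dg_union[OF TI finT finI] .
  have M: "real (card E) = 6 + n + r + e + eb"
  proof -
    have cA: "real (card (A u)) = 3 + n"
    proof -
      have "card (A u) = card T + card I" unfolding AT using finT finI TI by (rule card_Un_disjoint)
      then show ?thesis using ab T_def n_def by simp
    qed
    have sA: "(\<Sum>w\<in>A u. dg (A u) w) = 6"
    proof -
      have "(\<Sum>w\<in>A u. dg (A u) w) = (\<Sum>w\<in>T. dg (A u) w) + (\<Sum>w\<in>I. dg (A u) w)"
        unfolding AT using finT finI TI by (rule sum.union_disjoint)
      also have "(\<Sum>w\<in>I. dg (A u) w) = 0" using I0 by (simp add: dgA)
      also have "(\<Sum>w\<in>T. dg (A u) w) = 6" using Tsum ab by (simp add: dgA)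
      finally show ?thesis by simp
    qed
    have sB: "(\<Sum>x\<in>B u. dg (A u) x) = r + e"
      unfolding r_def e_def dgA_split by (simp add: sum.distrib)
    show ?thesis using edges_u[OF u] cA sA sB eb_def by simp
  qed
  have dT1: "\<And>x. x \<in> B u \<Longrightarrow> dg T x \<le> 1"
    using dgT_le1[OF z aA bA zab(1) _ zab(2)] ab(3) T_def by (auto simp: insert_commute)
  have F3: "L * bT \<le> r + e + 2 * eb"
  proof -
    have "L * bT = (\<Sum>x\<in>B u. dg T x * (L * y x))"
      unfolding bT_eq by (simp add: sum_distrib_left mult_ac)
    also have "\<dots> \<le> (\<Sum>x\<in>B u. dg T x * (dg T x + dg I x + dg (B u) x))"
    proof (intro sum_mono)
      fix x assume x: "x \<in> B u"
      show "dg T x * (L * y x) \<le> dg T x * (dg T x + dg I x + dg (B u) x)"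
        using eigB_le[OF u x] dgA_split[of x] dg_nonneg[of T x] unfolding L_def
        by (intro mult_left_mono) auto
    qed
    also have "\<dots> \<le> (\<Sum>x\<in>B u. dg T x + dg I x + dg (B u) x)"
    proof (intro sum_mono)
      fix x assume x: "x \<in> B u"
      have h0: "0 \<le> dg T x" "0 \<le> dg I x" "0 \<le> dg (B u) x" by (rule dg_nonneg)+
      have h1: "dg T x \<le> 1" using dT1[OF x] .
      have "dg T x * dg T x \<le> 1 * dg T x" using h0 h1 by (intro mult_right_mono) auto
      moreover have "dg T x * dg I x \<le> 1 * dg I x" using h0 h1 by (intro mult_right_mono) auto
      moreover have "dg T x * dg (B u) x \<le> 1 * dg (B u) x" using h0 h1 by (intro mult_right_mono) auto
      ultimately show "dg T x * (dg T x + dg I x + dg (B u) x) \<le> dg T x + dg I x + dg (B u) x"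
        by (simp add: algebra_simps)
    qed
    also have "\<dots> = r + e + 2 * eb" by (simp add: sum.distrib r_def e_def eb_def)
    finally show ?thesis .
  qed
  have yB: "\<And>x. x \<in> B u \<Longrightarrow> y x \<le> 1" using yle B_sub by blast
  have bIe: "bI \<le> e" unfolding bI_eq e_def
    using yB dg_nonneg by (intro sum_mono) (auto intro!: mult_left_le)
  have bI0: "0 \<le> bI" unfolding bI_eq using dg_nonneg ynn by (intro sum_nonneg mult_nonneg_nonneg) auto
  have bT0: "0 \<le> bT" unfolding bT_eq using dg_nonneg ynn by (intro sum_nonneg mult_nonneg_nonneg) auto
  have bTr: "bT \<le> r" unfolding bT_eq r_def
    using yB dg_nonneg by (intro sum_mono) (auto intro!: mult_left_le)
  have eb0: "0 \<le> eb" unfolding eb_def using dg_nonneg by (simp add: sum_nonneg)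
  have e0: "0 \<le> e" unfolding e_def using dg_nonneg by (simp add: sum_nonneg)
  have YT3: "YT \<le> 3" using yle z aA bA A_sub unfolding YT_def by (smt (verit) subsetD)
  have YI0: "0 \<le> YI" unfolding YI_def using ynn by (simp add: sum_nonneg)
  have rnat: "r = 0 \<or> r \<ge> 1"
  proof -
    obtain k :: nat where "r = real k" using sum_dg_nat[of T "B u"] TA A_sub r_def by blast
    then show ?thesis by (cases k) auto
  qed
  have Hm: "5 + n + r + e + eb \<le> L^2 - L" using H M L_def by simp
  have L0: "0 \<le> L" using Lsum YI0 ynn unfolding YT_def by (smt (verit))
  have L3: "L > 3"
  proof (rule ccontr)
    assume "\<not> L > 3"
    then have "L * L \<le> 3 * L" using L0 by (intro mult_right_mono) auto
    then have "L^2 - L \<le> 2 * L" by (simp add: power2_eq_square)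
    then show False using Hm M m8 \<open>\<not> L > 3\<close> L_def by linarith
  qed
  have L10: "L^2 > 10"
  proof -
    have "L^2 \<ge> L + 7" using Hm M m8 L_def by linarith
    then show ?thesis using L3 by linarith
  qed
  have K: "L * bT \<ge> L^2 - 10 + (L - 2) * (r + e + eb - bI)"
  proof -
    have e1: "(L - 2) * YI = (L - 2) * L - 3 - bT" using ET Lsum by (simp add: algebra_simps)
    have e2: "(L - 2) * n = L * ((L - 2) * L - 3 - bT) - (L - 2) * bI"
    proof -
      have "(L - 2) * n = (L - 2) * (L * YI) - (L - 2) * bI" using EI by (simp add: algebra_simps)
      also have "(L - 2) * (L * YI) = L * ((L - 2) * YI)" by (simp add: algebra_simps)
      finally show ?thesis using e1 by simp
    qed
    have "(L - 2) * (5 + n + r + e + eb) \<le> (L - 2) * (L^2 - L)"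
      using Hm L3 by (intro mult_left_mono) auto
    then have "(L - 2) * (5 + r + e + eb) + (L - 2) * n \<le> (L - 2) * (L^2 - L)"
      by (simp add: algebra_simps)
    then have "(L - 2) * (5 + r + e + eb) + L * ((L - 2) * L - 3 - bT) - (L - 2) * bI
                \<le> (L - 2) * (L^2 - L)" using e2 by simp
    then show ?thesis by (simp add: algebra_simps power2_eq_square power3_eq_cube)
  qed
  have star: "L - 5 + n + (L - 2) * r + (L - 3) * eb \<le> 0"
  proof -
    have "(L - 2) * (e - bI) \<ge> 0" using bIe L3 by simp
    then have "L^2 - 10 + (L - 2) * (r + e + eb - bI) \<ge> L^2 - 10 + (L - 2) * (r + eb)"
      by (simp add: algebra_simps)
    then have "r + e + 2 * eb \<ge> L - 5 + n + r + e + eb + (L - 2) * (r + eb)"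
      using K F3 Hm by linarith
    then show ?thesis by (simp add: algebra_simps)
  qed
  have Lr: "(L - 2) * r \<ge> 0" and Leb: "(L - 3) * eb \<ge> 0" using L3 eb0 rnat by auto
  show False
  proof (cases "card I")
    case 0
    then have "I = {}" using finI by simp
    then have "YI = 0" by (simp add: YI_def)
    then show ?thesis using Lsum YT3 L3 by simp
  next
    case (Suc k)
    show ?thesis
    proof (cases k)
      case 0
      then have n1: "n = 1" using Suc n_def by simp
      show ?thesis
      proof (cases "r = 0")
        case True
        then have "bT = 0" using bT0 bTr by simp
        then have "0 \<ge> L^2 - 10 + (L - 2) * (e + eb - bI)" using K True by simp
        moreover have "(L - 2) * (e + eb - bI) \<ge> 0" using bIe eb0 L3 by simp
        ultimately show False using L10 by linarith
      next
        case False
        then have "r \<ge> 1" using rnat by simp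
        then have "(L - 2) * r \<ge> (L - 2) * 1" using L3 by (intro mult_left_mono) auto
        then have "(L - 2) * r \<ge> L - 2" by simp
        then show False using star n1 Leb L3 by linarith
      qed
    next
      case (Suc j)
      then have "n \<ge> 2" using \<open>card I = Suc k\<close> n_def by simp
      then show False using star Lr Leb L3 by linarith
    qed
  qed
qed

end

context g5 begin

lemma tri_A_nbrs:
  assumes "tri u w" shows "NA u w \<subseteq> A u" using NA_A .

lemma part_bound:
  assumes u: "u \<in> V" and x: "x \<in> B u"
    and Tr: "Tr = {w \<in> A u. tri u w}"
  shows "3 * card (Tr \<inter> N x) \<le> card Tr"
proof -
  define P where "P = Tr \<inter> N x"
  have finTr: "finite Tr" using Tr finA by simp
  have finP: "finite P" using P_def finTr by simp
  have PTr: "P \<subseteq> Tr" using P_def by simp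
  have nb: "\<And>w. w \<in> P \<Longrightarrow> NA u w \<subseteq> Tr \<and> NA u w \<inter> N x = {} \<and> card (NA u w) = 2"
  proof -
    fix w assume w: "w \<in> P"
    then have wA: "w \<in> A u" and tw: "tri u w" and xw: "{x,w} \<in> E"
      using P_def Tr by (auto simp: N_iff insert_commute)
    obtain a b where ab: "a \<noteq> b" "NA u w = {a,b}" "{a,b} \<in> E" "NA u a = {w,b}" "NA u b = {w,a}"
      "card (NA u w) = 2" using tri_facts[OF tw] by metis
    have aA: "a \<in> A u" "b \<in> A u" using ab(2) NA_A by blast+
    have wa: "{w,a} \<in> E" "{w,b} \<in> E" using ab(2) by (auto simp: NA_def N_iff)
    have "NA u w \<subseteq> Tr" using tri_nbr[OF tw] ab(2) Tr aA by auto
    moreover have "a \<notin> N x"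
    proof
      assume "a \<in> N x"
      then have "{x,a} \<in> E" by (simp add: N_iff)
      then show False using k4[OF wA aA(1) aA(2) wa(1) ab(3) wa(2) x xw] by simp
    qed
    moreover have "b \<notin> N x"
    proof
      assume "b \<in> N x"
      then have "{x,b} \<in> E" by (simp add: N_iff)
      then show False using k4[OF wA aA(2) aA(1) wa(2) _ wa(1) x xw] ab(3) by (simp add: insert_commute)
    qed
    ultimately show "NA u w \<subseteq> Tr \<and> NA u w \<inter> N x = {} \<and> card (NA u w) = 2" using ab by auto
  qed
  have disj: "\<And>w w'. w \<in> P \<Longrightarrow> w' \<in> P \<Longrightarrow> w \<noteq> w' \<Longrightarrow> NA u w \<inter> NA u w' = {}"
  proof (rule ccontr)
    fix w w' assume w: "w \<in> P" and w': "w' \<in> P" and ne: "w \<noteq> w'" and ni: "NA u w \<inter> NA u w' \<noteq> {}"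
    then obtain c where c: "c \<in> NA u w" "c \<in> NA u w'" by blast
    have wA: "w \<in> A u" and tw: "tri u w" and w'A: "w' \<in> A u" using w w' P_def Tr by auto
    obtain a b where ab: "a \<noteq> b" "NA u w = {a,b}" "{a,b} \<in> E" "NA u a = {w,b}" "NA u b = {w,a}"
      using tri_facts[OF tw] by metis
    have cA: "c \<in> A u" using c NA_A by blast
    have "w' \<in> NA u c" using NA_sym[OF c(2) w'A] .
    then have "w' \<in> NA u w" using c(1) ab ne by auto
    then have "{w,w'} \<in> E" by (simp add: NA_def N_iff)
    moreover have "w' \<in> N x" "w \<in> N x" using w w' P_def by auto
    ultimately show False using nb[OF w] \<open>w' \<in> NA u w\<close> by blast
  qed
  have cU: "card (\<Union>w\<in>P. NA u w) = (\<Sum>w\<in>P. card (NA u w))"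
    by (rule card_UN_disjoint) (use finP finNA disj in auto)
  also have "\<dots> = 2 * card P" using nb by simp
  finally have cU2: "card (\<Union>w\<in>P. NA u w) = 2 * card P" .
  have PU: "P \<inter> (\<Union>w\<in>P. NA u w) = {}" using nb P_def by auto
  have sub: "P \<union> (\<Union>w\<in>P. NA u w) \<subseteq> Tr" using nb PTr by auto
  have finU: "finite (\<Union>w\<in>P. NA u w)" using finP finNA by simp
  have "card (P \<union> (\<Union>w\<in>P. NA u w)) = card P + 2 * card P"
    using card_Un_disjoint[OF finP finU PU] cU2 by simp
  moreover have "card (P \<union> (\<Union>w\<in>P. NA u w)) \<le> card Tr" using card_mono[OF finTr sub] .
  ultimately show ?thesis using P_def by simp
qed

end

context g5 begin

lemma S_le1: "u \<in> V \<Longrightarrow> y u = 1 \<Longrightarrow> real (card E) - 1 \<le> lam^2 - lam \<Longrightarrow> S u \<le> 1"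
  using ident by force

lemma caseB3_false:
  assumes u: "u \<in> V" and yu: "y u = 1" and nA: "\<not> caseA u"
    and z: "z \<in> A u" and tz: "tri u z" and z': "z' \<in> A u" and tz': "tri u z'"
    and nz: "z' \<notin> insert z (NA u z)"
    and m8: "8 \<le> real (card E)" and H: "real (card E) - 1 \<le> lam^2 - lam"
  shows False
proof -
  define Tr where "Tr = {w \<in> A u. tri u w}"
  define I where "I = A u - Tr"
  have finTr: "finite Tr" using Tr_def finA by simp
  have finI: "finite I" using I_def finA by simp
  have AT: "A u = Tr \<union> I" and TI: "Tr \<inter> I = {}" using Tr_def I_def by auto
  have I0: "\<And>w. w \<in> I \<Longrightarrow> NA u w = {}" using I0_of[OF nA] I_def Tr_def by auto
  have S1: "S u \<le> 1" using S_le1[OF u yu H] .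
  define n where "n = real (card Tr)"
  define YT where "YT = (\<Sum>w\<in>Tr. y w)"
  define YI where "YI = (\<Sum>w\<in>I. y w)"
  have psiT: "\<And>w. w \<in> Tr \<Longrightarrow> psi u w = 1 - y w"
  proof -
    fix w assume "w \<in> Tr"
    then have "tri u w" using Tr_def by simp
    then have "card (NA u w) = 2" using tri_facts by metis
    then show "psi u w = 1 - y w" by (simp add: psi_def dgA)
  qed
  have psiI: "\<And>w. w \<in> I \<Longrightarrow> psi u w = y w" using I0 by (simp add: psi_def dgA)
  have Sform: "S u = (n - YT) + YI + (\<Sum>x\<in>B u. chi u x)"
  proof -
    have "(\<Sum>w\<in>A u. psi u w) = (\<Sum>w\<in>Tr. psi u w) + (\<Sum>w\<in>I. psi u w)"
      unfolding AT using finTr finI TI by (rule sum.union_disjoint)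
    also have "(\<Sum>w\<in>Tr. psi u w) = n - YT" using psiT by (simp add: n_def YT_def sum_subtractf)
    also have "(\<Sum>w\<in>I. psi u w) = YI" using psiI by (simp add: YI_def)
    finally show ?thesis by (simp add: S_def)
  qed
  have chi0: "0 \<le> (\<Sum>x\<in>B u. chi u x)" using chi_nonneg by (simp add: sum_nonneg)
  have YTn: "YT \<le> n"
  proof -
    have "(\<Sum>w\<in>Tr. y w) \<le> (\<Sum>w\<in>Tr. 1)"
      using yle Tr_def A_sub by (intro sum_mono) auto
    then show ?thesis by (simp add: YT_def n_def)
  qed
  have YI0: "0 \<le> YI" using ynn by (simp add: YI_def sum_nonneg)
  have i1: "n - 1 \<le> YT" and i2: "YI \<le> 1" and i3: "(\<Sum>x\<in>B u. chi u x) \<le> 1"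
    using Sform S1 chi0 YTn YI0 by linarith+
  have Lsum: "lam = YT + YI"
  proof -
    have "lam = (\<Sum>w\<in>A u. y w)" by (rule lamA[OF u yu])
    also have "\<dots> = YT + YI" unfolding AT YT_def YI_def using finTr finI TI by (rule sum.union_disjoint)
    finally show ?thesis .
  qed
  have L1: "n - 1 \<le> lam" using Lsum i1 YI0 by linarith
  \<comment> \<open>six distinct triangle vertices\<close>
  have n6: "n \<ge> 6"
  proof -
    obtain a b where ab: "a \<noteq> b" "NA u z = {a,b}" "NA u a = {z,b}" "NA u b = {z,a}"
      "z \<noteq> a" "z \<noteq> b" using tri_facts[OF tz] by metis
    obtain a' b' where ab': "a' \<noteq> b'" "NA u z' = {a',b'}" "z' \<noteq> a'" "z' \<noteq> b'"
      using tri_facts[OF tz'] by metis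
    have out: "\<And>c. c \<in> NA u z' \<Longrightarrow> c \<notin> insert z (NA u z)"
    proof
      fix c assume c: "c \<in> NA u z'" and ci: "c \<in> insert z (NA u z)"
      have cA: "c \<in> A u" using c NA_A by blast
      have zc: "z' \<in> NA u c" using NA_sym[OF c z'] .
      show False
      proof -
        have "c = z \<or> c = a \<or> c = b" using ci ab(2) by auto
        then show False using zc ab nz by auto
      qed
    qed
    have abA: "a \<in> A u" "b \<in> A u" "a' \<in> A u" "b' \<in> A u" using ab(2) ab'(2) NA_A by blast+
    have abT: "tri u a" "tri u b" "tri u a'" "tri u b'"
      using tri_nbr[OF tz] tri_nbr[OF tz'] ab(2) ab'(2) by auto
    have sub: "{z,a,b,z',a',b'} \<subseteq> Tr"
      using z z' tz tz' abA abT by (simp add: Tr_def)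
    have d1: "a' \<noteq> z" "a' \<noteq> a" "a' \<noteq> b" "b' \<noteq> z" "b' \<noteq> a" "b' \<noteq> b"
      using out[of a'] out[of b'] ab'(2) ab(2) by auto
    have d2: "z' \<noteq> z" "z' \<noteq> a" "z' \<noteq> b" using nz ab(2) by auto
    have "card {z,a,b,z',a',b'} = 6" using ab(1,5,6) ab'(1,3,4) d1 d2 by simp
    then show ?thesis using card_mono[OF finTr sub] n_def by simp
  qed
  define b where "b = (\<Sum>x\<in>B u. dg Tr x * y x)"
  define ET where "ET = (\<Sum>x\<in>B u. dg Tr x)"
  define DB where "DB = (\<Sum>x\<in>B u. dg (B u) x)"
  have dgA_split: "\<And>x. dg (A u) x = dg Tr x + dg I x"
    unfolding AT using dg_union[OF TI finTr finI] .
  have v: "lam * YT \<le> 3 * n + b"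
  proof -
    have "lam * YT = (\<Sum>w\<in>Tr. lam * y w)" by (simp add: YT_def sum_distrib_left)
    also have "\<dots> \<le> (\<Sum>w\<in>Tr. 3 + (\<Sum>x\<in>B u. adj E w x * y x))"
    proof (intro sum_mono)
      fix w assume w: "w \<in> Tr"
      then have wA: "w \<in> A u" and tw: "tri u w" using Tr_def by auto
      obtain p q where pq: "p \<noteq> q" "NA u w = {p,q}" using tri_facts[OF tw] by metis
      have "p \<in> V" "q \<in> V" using pq(2) NA_A A_sub by blast+
      then have "y p + y q \<le> 2" using yle by (smt (verit))
      then show "lam * y w \<le> 3 + (\<Sum>x\<in>B u. adj E w x * y x)" using eigA[OF u yu wA] pq by simp
    qed
    also have "\<dots> = 3 * n + b"
    proof -
      have "(\<Sum>w\<in>Tr. \<Sum>x\<in>B u. adj E w x * y x) = b"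
        unfolding b_def dg_def sum_distrib_right by (subst sum.swap) (simp add: adj_sym)
      then show ?thesis by (simp add: sum.distrib n_def)
    qed
    finally show ?thesis .
  qed
  have vi: "\<And>x. x \<in> B u \<Longrightarrow> lam * y x \<le> dg Tr x + 1 + dg (B u) x"
  proof -
    fix x assume x: "x \<in> B u"
    have xV: "x \<in> V" using x B_sub by blast
    have "lam * y x = (\<Sum>w\<in>A u. adj E x w * y w) + (\<Sum>w\<in>B u. adj E x w * y w)"
      using eig_split[OF u xV] adj_uB[OF x] by simp
    also have "(\<Sum>w\<in>A u. adj E x w * y w) = (\<Sum>w\<in>Tr. adj E x w * y w) + (\<Sum>w\<in>I. adj E x w * y w)"
      unfolding AT using finTr finI TI by (rule sum.union_disjoint)
    also have "(\<Sum>w\<in>Tr. adj E x w * y w) \<le> dg Tr x"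
      unfolding dg_def using yle Tr_def A_sub
      by (intro sum_mono) (auto intro!: mult_left_le simp: adj_nonneg)
    also have "(\<Sum>w\<in>I. adj E x w * y w) \<le> YI"
      unfolding YI_def using ynn by (intro sum_mono) (auto intro!: mult_left_le_one_le simp: adj_nonneg adj_le1)
    also have "(\<Sum>w\<in>B u. adj E x w * y w) \<le> dg (B u) x"
      unfolding dg_def using yle B_sub
      by (intro sum_mono) (auto intro!: mult_left_le simp: adj_nonneg)
    finally show "lam * y x \<le> dg Tr x + 1 + dg (B u) x" using i2 by linarith
  qed
  have p3: "\<And>x. x \<in> B u \<Longrightarrow> 3 * dg Tr x \<le> n"
  proof -
    fix x assume x: "x \<in> B u"
    have "3 * card (Tr \<inter> N x) \<le> card Tr" using part_bound[OF u x Tr_def] .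
    moreover have "Tr \<subseteq> V" using Tr_def A_sub by auto
    ultimately show "3 * dg Tr x \<le> n" using dg_card n_def by (metis of_nat_le_iff of_nat_mult of_nat_numeral)
  qed
  have chiB: "\<And>x. x \<in> B u \<Longrightarrow> dg Tr x * (1 - y x) + dg (B u) x / 2 \<le> chi u x"
  proof -
    fix x assume x: "x \<in> B u"
    have "y x \<le> 1" using x B_sub yle by blast
    then have "0 \<le> dg I x * (1 - y x)" using dg_nonneg by simp
    then show "dg Tr x * (1 - y x) + dg (B u) x / 2 \<le> chi u x"
      unfolding chi_def dgA_split by (simp add: algebra_simps)
  qed
  have iii: "ET - b + DB / 2 \<le> 1"
  proof -
    have "ET - b + DB / 2 = (\<Sum>x\<in>B u. dg Tr x * (1 - y x) + dg (B u) x / 2)"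
      by (simp add: ET_def b_def DB_def sum.distrib sum_subtractf algebra_simps sum_divide_distrib)
    also have "\<dots> \<le> (\<Sum>x\<in>B u. chi u x)" using chiB by (intro sum_mono) auto
    finally show ?thesis using i3 by simp
  qed
  have b0: "0 \<le> b" unfolding b_def using dg_nonneg ynn by (intro sum_nonneg mult_nonneg_nonneg) auto
  have DB0: "0 \<le> DB" unfolding DB_def using dg_nonneg by (simp add: sum_nonneg)
  have Lb: "lam * b \<le> (n/3 + 1) * ET + (n/3) * DB"
  proof -
    have "lam * b = (\<Sum>x\<in>B u. dg Tr x * (lam * y x))" by (simp add: b_def sum_distrib_left mult_ac)
    also have "\<dots> \<le> (\<Sum>x\<in>B u. dg Tr x * (dg Tr x + 1 + dg (B u) x))"
      using vi dg_nonneg by (intro sum_mono mult_left_mono) auto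
    also have "\<dots> \<le> (\<Sum>x\<in>B u. (n/3 + 1) * dg Tr x + (n/3) * dg (B u) x)"
    proof (intro sum_mono)
      fix x assume x: "x \<in> B u"
      have h: "dg Tr x \<le> n/3" using p3[OF x] by simp
      have g0: "0 \<le> dg Tr x" "0 \<le> dg (B u) x" by (rule dg_nonneg)+
      have "dg Tr x * dg Tr x \<le> (n/3) * dg Tr x" using h g0 by (intro mult_right_mono) auto
      moreover have "dg Tr x * dg (B u) x \<le> (n/3) * dg (B u) x" using h g0 by (intro mult_right_mono) auto
      ultimately show "dg Tr x * (dg Tr x + 1 + dg (B u) x) \<le> (n/3 + 1) * dg Tr x + (n/3) * dg (B u) x"
        by (simp add: algebra_simps)
    qed
    also have "\<dots> = (n/3 + 1) * ET + (n/3) * DB"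
      by (simp add: ET_def DB_def sum.distrib sum_distrib_left)
    finally show ?thesis .
  qed
  have bET: "b \<le> ET" unfolding b_def ET_def
    using yle B_sub dg_nonneg by (intro sum_mono) (auto intro!: mult_left_le)
  have DB2: "DB \<le> 2" using iii bET by linarith
  have ETb: "ET \<le> b + 1" using iii DB0 by linarith
  have bL: "(n - 1) * b \<le> lam * b" using L1 b0 by (intro mult_right_mono) auto
  have n3: "0 \<le> n/3 + 1" using n6 by simp
  have "(n - 1) * b \<le> (n/3 + 1) * (b + 1) + (n/3) * 2"
  proof -
    have "(n/3 + 1) * ET \<le> (n/3 + 1) * (b + 1)" using ETb n3 by (intro mult_left_mono) auto
    moreover have "(n/3) * DB \<le> (n/3) * 2" using DB2 n6 by (intro mult_left_mono) auto
    ultimately show ?thesis using bL Lb by linarith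
  qed
  then have fin1: "b * (2 * n - 6) \<le> 3 * (n + 1)" by (simp add: algebra_simps field_simps)
  have bge: "b \<ge> (n - 1) * (n - 1) - 3 * n"
  proof -
    have "(n - 1) * (n - 1) \<le> lam * YT"
      using L1 i1 n6 by (intro mult_mono) auto
    then show ?thesis using v by linarith
  qed
  have "(n - 1) * (n - 1) - 3 * n \<ge> n + 1"
  proof -
    have "n * n \<ge> 6 * n" using n6 by (intro mult_right_mono) auto
    then show ?thesis by (simp add: algebra_simps)
  qed
  then have "b \<ge> n + 1" using bge by linarith
  then have m1: "(n + 1) * (2 * n - 6) \<le> b * (2 * n - 6)" using n6 by (intro mult_right_mono) auto
  have m2: "(n + 1) * 6 \<le> (n + 1) * (2 * n - 6)" using n6 by (intro mult_left_mono) auto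
  have "(n + 1) * 6 \<le> 3 * (n + 1)" using order_trans[OF order_trans[OF m2 m1] fin1] .
  then show False using n6 by simp
qed

end

context g5 begin

lemma lam_pos_H:
  assumes m8: "8 \<le> real (card E)" and H: "real (card E) - 1 \<le> lam^2 - lam" and L0: "0 \<le> lam"
  shows "lam > 3"
proof (rule ccontr)
  assume "\<not> lam > 3"
  then have "lam * lam \<le> 3 * lam" using L0 by (intro mult_right_mono) auto
  then have "lam^2 - lam \<le> 2 * lam" by (simp add: power2_eq_square)
  then show False using H m8 \<open>\<not> lam > 3\<close> by linarith
qed

lemma lam_nonneg: "u \<in> V \<Longrightarrow> y u = 1 \<Longrightarrow> 0 \<le> lam"
  using lamA[of u] ynn by (simp add: sum_nonneg)

lemma caseB_false:
  assumes u: "u \<in> V" and yu: "y u = 1" and nA: "\<not> caseA u"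
    and m8: "8 \<le> real (card E)" and H: "real (card E) - 1 \<le> lam^2 - lam"
  shows False
proof (cases "\<exists>z\<in>A u. tri u z")
  case False
  then have I0: "\<And>w. w \<in> A u \<Longrightarrow> NA u w = {}" using I0_of[OF nA] by blast
  have "(\<Sum>w\<in>A u. psi u w) = (\<Sum>w\<in>A u. y w)"
    using I0 by (intro sum.cong) (simp_all add: psi_def dgA)
  then have "S u \<ge> lam" using lamA[OF u yu] chi_nonneg sum_nonneg[of "B u" "chi u"]
    by (simp add: S_def)
  moreover have "S u \<le> 1" using S_le1[OF u yu H] .
  moreover have "lam > 3" using lam_pos_H[OF m8 H lam_nonneg[OF u yu]] .
  ultimately show False by simp
next
  case True
  then obtain z where z: "z \<in> A u" "tri u z" by blast
  show False
  proof (cases "\<forall>w\<in>A u. tri u w \<longrightarrow> w \<in> insert z (NA u z)")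
    case True
    then show False using caseB2_false[OF u yu nA z _ m8 H] by blast
  next
    case False
    then obtain z' where "z' \<in> A u" "tri u z'" "z' \<notin> insert z (NA u z)" by blast
    then show False using caseB3_false[OF u yu nA z _ _ _ m8 H] by blast
  qed
qed

lemma main_ineq:
  assumes u: "u \<in> V" and yu: "y u = 1" and m8: "8 \<le> real (card E)"
  shows "lam^2 - lam \<le> real (card E) - 1"
proof (cases "real (card E) - 1 \<le> lam^2 - lam")
  case True
  then have "caseA u" using caseB_false[OF u yu _ m8] by blast
  then have "1 \<le> S u" using S_ge1[OF u] by simp
  then show ?thesis using ident[OF u yu] by simp
next
  case False then show ?thesis by simp
qed

end

context g5 begin

lemma A_N: "A u = N u" by (simp add: A_def)

lemma in_V_cases: "u \<in> V \<Longrightarrow> v \<in> V \<Longrightarrow> v = u \<or> v \<in> A u \<or> v \<in> B u"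
  using V_split by blast

lemma tri_excl:
  assumes u: "u \<in> V" and yu: "y u = 1" and m8: "8 \<le> real (card E)"
    and Heq: "lam^2 - lam = real (card E) - 1"
    and dB0: "\<And>x. x \<in> B u \<Longrightarrow> dg (B u) x = 0"
    and w: "w \<in> A u" and tw: "tri u w" and yw: "y w = 1"
  shows False
proof -
  obtain a b where ab: "a \<noteq> b" "NA u w = {a,b}" "{a,b} \<in> E" "NA u a = {w,b}" "NA u b = {w,a}"
    "w \<noteq> a" "w \<noteq> b" using tri_facts[OF tw] by metis
  have aA: "a \<in> A u" and bA: "b \<in> A u" using ab(2) NA_A by blast+
  have wV: "w \<in> V" using w A_sub by blast
  have wa: "{w,a} \<in> E" "{w,b} \<in> E" using ab(2) by (auto simp: NA_def N_iff)
  have uw: "u \<in> N w" using w by (simp add: A_def N_sym)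
  have noB: "\<And>v. v \<in> B u \<Longrightarrow> v \<in> N w \<Longrightarrow> v \<in> N a \<or> v \<in> N b \<Longrightarrow> False"
  proof -
    fix v assume v: "v \<in> B u" "v \<in> N w" "v \<in> N a \<or> v \<in> N b"
    have vw: "{v,w} \<in> E" using v(2) by (simp add: N_iff insert_commute)
    show False
    proof (cases "v \<in> N a")
      case True
      then have "{v,a} \<in> E" by (simp add: N_iff insert_commute)
      then show False using k4[OF w aA bA wa(1) ab(3) wa(2) v(1) vw] by simp
    next
      case False
      then have "{v,b} \<in> E" using v(3) by (simp add: N_iff insert_commute)
      then show False using k4[OF w bA aA wa(2) _ wa(1) v(1) vw] ab(3) by (simp add: insert_commute)
    qed
  qed
  have NAwu: "NA w u = {a,b}"
  proof -
    have "NA w u = A u \<inter> N w" unfolding NA_def A_def using N_sym by blast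
    then show ?thesis using ab(2) by (simp add: NA_def)
  qed
  have NAwa: "NA w a = {u,b}"
  proof (intro equalityI subsetI)
    fix v assume v: "v \<in> NA w a"
    then have vN: "v \<in> N w" "v \<in> N a" by (auto simp: NA_def A_def)
    then have vV: "v \<in> V" using N_sub by blast
    consider "v = u" | "v \<in> A u" | "v \<in> B u" using in_V_cases[OF u vV] by blast
    then show "v \<in> {u,b}"
    proof cases
      case 2
      then have "v \<in> NA u w" "v \<in> NA u a" using vN by (auto simp: NA_def)
      then show ?thesis using ab by auto
    next
      case 3 then show ?thesis using noB vN by blast
    qed simp
  next
    fix v assume "v \<in> {u,b}"
    moreover have "u \<in> N a" using aA by (simp add: A_def N_sym)
    moreover have "b \<in> N a" using ab(4) by (auto simp: NA_def)
    moreover have "b \<in> N w" using ab(2) by (auto simp: NA_def)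
    ultimately show "v \<in> NA w a" using uw by (auto simp: NA_def A_def)
  qed
  have NAwb: "NA w b = {u,a}"
  proof (intro equalityI subsetI)
    fix v assume v: "v \<in> NA w b"
    then have vN: "v \<in> N w" "v \<in> N b" by (auto simp: NA_def A_def)
    then have vV: "v \<in> V" using N_sub by blast
    consider "v = u" | "v \<in> A u" | "v \<in> B u" using in_V_cases[OF u vV] by blast
    then show "v \<in> {u,a}"
    proof cases
      case 2
      then have "v \<in> NA u w" "v \<in> NA u b" using vN by (auto simp: NA_def)
      then show ?thesis using ab by auto
    next
      case 3 then show ?thesis using noB vN by blast
    qed simp
  next
    fix v assume "v \<in> {u,a}"
    moreover have "u \<in> N b" using bA by (simp add: A_def N_sym)
    moreover have "a \<in> N b" using ab(5) by (auto simp: NA_def)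
    moreover have "a \<in> N w" using ab(2) by (auto simp: NA_def)
    ultimately show "v \<in> NA w b" using uw by (auto simp: NA_def A_def)
  qed
  have ua: "{u,a} \<in> E" "{u,b} \<in> E" using aA bA NA_uN by auto
  have ub: "u \<noteq> a" "u \<noteq> b" using aA bA uA by blast+
  have c1: "{u,a} = {a,u}" "{u,b} = {b,u}" "{a,b} = {b,a}" by blast+
  have tu: "tri w u" unfolding tri_def
    by (rule exI[of _ a], rule exI[of _ b]) (intro conjI; (fact ab(1) | fact NAwu | fact ab(3) | fact NAwa | fact NAwb))
  have ta: "tri w a" unfolding tri_def
    by (rule exI[of _ u], rule exI[of _ b]) (intro conjI; (fact ub(2) | fact NAwa | fact ua(2) | fact NAwu | (simp only: NAwb c1)))
  have tb: "tri w b" unfolding tri_def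
    by (rule exI[of _ u], rule exI[of _ a]) (intro conjI; (fact ub(1) | fact NAwb | fact ua(1) | (simp only: NAwu c1) | (simp only: NAwa c1)))
  have nA: "\<not> caseA w"
  proof
    assume "caseA w"
    then obtain z where z: "z \<in> A w" "card (NA w z) \<ge> 1" "\<not> tri w z" unfolding caseA_def by blast
    have zN: "z \<in> N w" using z(1) by (simp add: A_def)
    then have zV: "z \<in> V" using N_sub by blast
    consider "z = u" | "z \<in> A u" | "z \<in> B u" using in_V_cases[OF u zV] by blast
    then show False
    proof cases
      case 1 then show False using tu z(3) by simp
    next
      case 2
      then have "z \<in> NA u w" using zN by (simp add: NA_def)
      then have "z = a \<or> z = b" using ab(2) by simp
      then show False using ta tb z(3) by auto
    next
      case 3
      have "NA w z = {}"
      proof (rule ccontr)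
        assume "NA w z \<noteq> {}"
        then obtain v where v: "v \<in> N w" "v \<in> N z" by (auto simp: NA_def A_def)
        then have vV: "v \<in> V" using N_sub by blast
        consider "v = u" | "v \<in> A u" | "v \<in> B u" using in_V_cases[OF u vV] by blast
        then show False
        proof cases
          case 1
          then have "z \<in> A u" using v(2) by (simp add: A_def N_sym)
          then show False using 3 AB_disj by blast
        next
          case 2
          then have "v \<in> NA u w" using v(1) by (simp add: NA_def)
          then have "v = a \<or> v = b" using ab(2) by simp
          then have "z \<in> N a \<or> z \<in> N b" using v(2) N_sym by blast
          then show False using noB[OF 3 zN] by blast
        next
          case vB: 3
          have "dg (B u) z = real (card (B u \<inter> N z))" using dg_card[OF B_sub] .
          moreover have "v \<in> B u \<inter> N z" using vB v(2) by simp
          ultimately have "dg (B u) z > 0" using finB by (auto simp: card_gt_0_iff)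
          then show False using dB0[OF 3] by simp
        qed
      qed
      then show False using z(2) by simp
    qed
  qed
  have H: "real (card E) - 1 \<le> lam^2 - lam" using Heq by simp
  show False using caseB_false[OF wV yw nA m8 H] .
qed

end

context g5 begin

lemma y_pos_A:
  assumes u: "u \<in> V" and yu: "y u = 1" and w: "w \<in> A u"
  shows "0 < y w"
proof -
  have "lam * y w = 1 + (\<Sum>v\<in>NA u w. y v) + (\<Sum>x\<in>B u. adj E w x * y x)" by (rule eigA[OF u yu w])
  moreover have "0 \<le> (\<Sum>v\<in>NA u w. y v)" using ynn by (simp add: sum_nonneg)
  moreover have "0 \<le> (\<Sum>x\<in>B u. adj E w x * y x)" using ynn adj_nonneg by (intro sum_nonneg mult_nonneg_nonneg) auto
  ultimately have "lam * y w \<ge> 1" by linarith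
  then have "y w \<noteq> 0" by auto
  then show ?thesis using ynn[of w] by simp
qed

lemma dg0_empty: "X \<subseteq> V \<Longrightarrow> dg X x = 0 \<Longrightarrow> X \<inter> N x = {}"
  using dg_card[of X x] finsub by (metis card_0_eq finite_Int of_nat_eq_0_iff)

lemma eq_struct:
  assumes u: "u \<in> V" and yu: "y u = 1" and m8: "8 \<le> real (card E)"
    and Heq: "lam^2 - lam = real (card E) - 1"
  shows "\<exists>c. c \<in> A u \<and> y c = 1 \<and> A u = insert c (NA u c) \<and> card (NA u c) \<ge> 2
           \<and> (\<forall>w\<in>NA u c. NA u w = {c}) \<and> (\<forall>x\<in>B u. N x = {})"
proof -
  have H: "real (card E) - 1 \<le> lam^2 - lam" using Heq by simp
  have L3: "lam > 3" using lam_pos_H[OF m8 H lam_nonneg[OF u yu]] .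
  have cA: "caseA u" using caseB_false[OF u yu _ m8 H] by blast
  have S1: "S u = 1" using ident[OF u yu] Heq by simp
  have P1: "1 \<le> (\<Sum>z\<in>A u. phi u z)" using sumphi_ge1[OF u cA] .
  have C0: "0 \<le> (\<Sum>x\<in>B u. chi u x)" using chi_nonneg by (simp add: sum_nonneg)
  have Pe: "(\<Sum>z\<in>A u. phi u z) = 1" and Ce: "(\<Sum>x\<in>B u. chi u x) = 0"
    using S1 S_eq_phi[of u] P1 C0 by linarith+
  have chi0: "\<And>x. x \<in> B u \<Longrightarrow> chi u x = 0"
    using Ce chi_nonneg finB sum_nonneg_eq_0_iff by blast
  have dB0: "\<And>x. x \<in> B u \<Longrightarrow> dg (B u) x = 0"
  proof -
    fix x assume x: "x \<in> B u"
    have "y x \<le> 1" using x B_sub yle by blast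
    then have "0 \<le> dg (A u) x * (1 - y x)" using dg_nonneg by simp
    then show "dg (B u) x = 0" using chi0[OF x] dg_nonneg[of "B u" x] unfolding chi_def by linarith
  qed
  have dA0: "\<And>x. x \<in> B u \<Longrightarrow> dg (A u) x = 0 \<or> y x = 1"
  proof -
    fix x assume x: "x \<in> B u"
    have "y x \<le> 1" using x B_sub yle by blast
    then have "0 \<le> dg (A u) x * (1 - y x)" using dg_nonneg by simp
    then have "dg (A u) x * (1 - y x) = 0" using chi0[OF x] dB0[OF x] unfolding chi_def by linarith
    then show "dg (A u) x = 0 \<or> y x = 1" by simp
  qed
  have nn: "\<And>x. x \<in> A u \<Longrightarrow> 0 \<le> phi u x" using phi_nonneg yle A_sub by blast
  have zero_rest: "\<And>W v. W \<subseteq> A u \<Longrightarrow> 1 \<le> (\<Sum>z\<in>W. phi u z) \<Longrightarrow> v \<in> A u - W \<Longrightarrow> phi u v = 0"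
  proof -
    fix W v assume W: "W \<subseteq> A u" "1 \<le> (\<Sum>z\<in>W. phi u z)" and v: "v \<in> A u - W"
    have finW: "finite W" using W(1) finA finite_subset by blast
    have "(\<Sum>z\<in>A u. phi u z) = (\<Sum>z\<in>W. phi u z) + (\<Sum>z\<in>A u - W. phi u z)"
      using W(1) finA by (metis add.commute sum.subset_diff)
    then have "(\<Sum>z\<in>A u - W. phi u z) \<le> 0" using Pe W(2) by linarith
    moreover have "0 \<le> (\<Sum>z\<in>A u - W. phi u z)" using nn by (intro sum_nonneg) auto
    ultimately have "(\<Sum>z\<in>A u - W. phi u z) = 0" by simp
    then show "phi u v = 0" using sum_nonneg_eq_0_iff[of "A u - W" "phi u"] finA nn v by auto
  qed
  have zero_leaf: "\<And>v. v \<in> A u \<Longrightarrow> phi u v = 0 \<Longrightarrow>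
      \<exists>c. NA u v = {c} \<and> card (NA u c) \<ge> 2 \<and> (\<forall>w\<in>NA u c. card (NA u w) = 1)"
  proof -
    fix v assume v: "v \<in> A u" and p0: "phi u v = 0"
    have yv: "y v \<le> 1" using v A_sub yle by blast
    consider (c0) "card (NA u v) = 0" | (c1) "card (NA u v) = 1"
      | (cs) "card (NA u v) \<ge> 2" "\<forall>w\<in>NA u v. card (NA u w) = 1" | (ct) "tri u v"
      using cls[OF v] by auto
    then show "\<exists>c. NA u v = {c} \<and> card (NA u c) \<ge> 2 \<and> (\<forall>w\<in>NA u c. card (NA u w) = 1)"
    proof cases
      case c0 then show ?thesis using phi0[OF c0] p0 y_pos_A[OF u yu v] by simp
    next
      case cs then show ?thesis using phis_ge1[OF cs yv] p0 by simp
    next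
      case ct
      then have "y v = 1" using phit[OF ct] p0 by simp
      then show ?thesis using tri_excl[OF u yu m8 Heq dB0 v ct] by simp
    next
      case c1
      then obtain c where c: "NA u v = {c}" by (meson card_1_singletonE)
      then have "lf u c = 0" using phi1[OF c] p0 by simp
      then have "card (NA u c) \<noteq> 1" unfolding lf_def by (auto split: if_splits)
      then show ?thesis using star_nbr[OF v c] c by blast
    qed
  qed
  obtain z where z: "z \<in> A u" "card (NA u z) \<ge> 1" "\<not> tri u z" using cA caseA_def by blast
  have yz: "y z \<le> 1" using z(1) A_sub yle by blast
  have "\<exists>c. c \<in> A u \<and> card (NA u c) \<ge> 2 \<and> (\<forall>w\<in>NA u c. card (NA u w) = 1)"
  proof -
    consider (c1) "card (NA u z) = 1" | (cs) "card (NA u z) \<ge> 2" "\<forall>w\<in>NA u z. card (NA u w) = 1"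
      using cls[OF z(1)] z(2,3) by auto
    then show ?thesis
    proof cases
      case cs then show ?thesis using z(1) by blast
    next
      case c1
      then obtain w where w: "NA u z = {w}" by (meson card_1_singletonE)
      have wA: "w \<in> A u" using w NA_A by blast
      show ?thesis
      proof (cases "card (NA u w) = 1")
        case False then show ?thesis using star_nbr[OF z(1) w False] wA by blast
      next
        case True
        have zw: "z \<in> NA u w" using NA_sym[of w u z] w z(1) by simp
        then have Nw: "NA u w = {z}" using True by (metis card_1_singletonE singletonD)
        have zw': "z \<noteq> w" using w NA_irr by force
        have pz: "phi u z = 1/2" using phi1[OF w] True by (simp add: lf_def)
        have pw: "phi u w = 1/2" using phi1[OF Nw] c1 by (simp add: lf_def)
        have W: "{z,w} \<subseteq> A u" "1 \<le> (\<Sum>x\<in>{z,w}. phi u x)" using z(1) wA pz pw zw' by auto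
        have Aeq: "A u = {z,w}"
        proof (rule ccontr)
          assume "A u \<noteq> {z,w}"
          then obtain v where v: "v \<in> A u - {z,w}" using W(1) by blast
          have "phi u v = 0" using zero_rest[OF W v] .
          then obtain c where c: "NA u v = {c}" "card (NA u c) \<ge> 2" "\<forall>x\<in>NA u c. card (NA u x) = 1"
            using zero_leaf v by blast
          have cA: "c \<in> A u" using c(1) NA_A by blast
          have "c \<noteq> z" "c \<noteq> w" using c(2) c1 True by auto
          then have "phi u c = 0" using zero_rest[OF W] cA by blast
          moreover have "1 \<le> phi u c" using phis_ge1[OF c(2,3)] cA A_sub yle by blast
          ultimately show False by simp
        qed
        have "lam = y z + y w" using lamA[OF u yu] Aeq zw' by simp
        moreover have "y z \<le> 1" "y w \<le> 1" using wA z(1) A_sub yle by blast+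
        ultimately show ?thesis using L3 by simp
      qed
    qed
  qed
  then obtain c where c: "c \<in> A u" "card (NA u c) \<ge> 2" "\<forall>w\<in>NA u c. card (NA u w) = 1" by blast
  have yc: "y c \<le> 1" using c(1) A_sub yle by blast
  have pc: "1 \<le> phi u c" using phis_ge1[OF c(2,3) yc] .
  have Wc: "{c} \<subseteq> A u" "1 \<le> (\<Sum>x\<in>{c}. phi u x)" using c(1) pc by auto
  have rest: "\<And>v. v \<in> A u - {c} \<Longrightarrow> NA u v = {c}"
  proof -
    fix v assume v: "v \<in> A u - {c}"
    have "phi u v = 0" using zero_rest[OF Wc v] .
    then obtain c' where c': "NA u v = {c'}" "card (NA u c') \<ge> 2" "\<forall>x\<in>NA u c'. card (NA u x) = 1"
      using zero_leaf v by blast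
    have c'A: "c' \<in> A u" using c'(1) NA_A by blast
    have "1 \<le> phi u c'" using phis_ge1[OF c'(2,3)] c'A A_sub yle by blast
    then have "c' = c" using zero_rest[OF Wc] c'A by force
    then show "NA u v = {c}" using c'(1) by simp
  qed
  have Aeq: "A u = insert c (NA u c)"
  proof (intro equalityI subsetI)
    fix v assume v: "v \<in> A u"
    show "v \<in> insert c (NA u c)"
    proof (cases "v = c")
      case False
      then have "c \<in> NA u v" using rest v by auto
      then show ?thesis using NA_sym[of c u v] v by simp
    qed simp
  next
    fix v assume "v \<in> insert c (NA u c)"
    then show "v \<in> A u" using c(1) NA_A by blast
  qed
  have leaves: "\<forall>w\<in>NA u c. NA u w = {c}"
    using rest NA_irr by (metis DiffI NA_A singletonD subsetD)
  have phic: "phi u c = 1"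
  proof -
    have "(\<Sum>z\<in>A u. phi u z) = phi u c + (\<Sum>z\<in>A u - {c}. phi u z)"
      using c(1) finA by (simp add: sum.remove)
    moreover have "(\<Sum>z\<in>A u - {c}. phi u z) = 0" using zero_rest[OF Wc] by simp
    ultimately show ?thesis using Pe by simp
  qed
  have ycc: "y c = 1"
  proof -
    have "real (card (NA u c)) - (real (card (NA u c)) - 1) * y c = 1" using phis[OF c(2,3)] phic by simp
    then have "(real (card (NA u c)) - 1) * (1 - y c) = 0" by (simp add: algebra_simps)
    then show ?thesis using c(2) by simp
  qed
  have Biso: "\<forall>x\<in>B u. N x = {}"
  proof
    fix x assume x: "x \<in> B u"
    have xV: "x \<in> V" using x B_sub by blast
    have BN: "B u \<inter> N x = {}" using dg0_empty[OF B_sub dB0[OF x]] .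
    have AN: "A u \<inter> N x = {}"
    proof (rule ccontr)
      assume ne: "A u \<inter> N x \<noteq> {}"
      then have "card (A u \<inter> N x) > 0" using finA by (simp add: card_gt_0_iff)
      then have "dg (A u) x \<noteq> 0" using dg_card[OF A_sub[of u], of x] by simp
      then have yx: "y x = 1" using dA0[OF x] by simp
      have "lam = (\<Sum>w\<in>A u \<inter> N x. y w)"
      proof -
        have "lam * y x = (\<Sum>w\<in>A u. adj E x w * y w) + (\<Sum>w\<in>B u. adj E x w * y w)"
          using eig_split[OF u xV] adj_uB[OF x] by simp
        also have "(\<Sum>w\<in>B u. adj E x w * y w) = 0" using sum_adj[OF B_sub] BN by simp
        also have "(\<Sum>w\<in>A u. adj E x w * y w) = (\<Sum>w\<in>A u \<inter> N x. y w)" using sum_adj[OF A_sub] .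
        finally show ?thesis using yx by simp
      qed
      moreover have "lam = (\<Sum>w\<in>A u. y w)" by (rule lamA[OF u yu])
      moreover have "(\<Sum>w\<in>A u. y w) = (\<Sum>w\<in>A u - A u \<inter> N x. y w) + (\<Sum>w\<in>A u \<inter> N x. y w)"
        using finA by (intro sum.subset_diff) auto
      moreover have "A u - A u \<inter> N x = A u - N x" by blast
      ultimately have "(\<Sum>w\<in>A u - N x. y w) = 0" by simp
      then have "\<forall>w\<in>A u - N x. y w = 0" using sum_nonneg_eq_0_iff[of "A u - N x" y] finA ynn by auto
      then have AsubN: "A u \<subseteq> N x" using y_pos_A[OF u yu] by force
      have "NA u c \<noteq> {}" using c(2) by auto
      then obtain l1 where l1: "l1 \<in> NA u c" by blast
      obtain l2 where l2: "l2 \<in> NA u c" "l2 \<noteq> l1" using card_ge2[OF finNA c(2) l1] by blast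
      have l: "l1 \<in> NA u c" "l2 \<in> NA u c" "l1 \<noteq> l2" using l1 l2 by auto
      have lA: "l1 \<in> A u" "l2 \<in> A u" using l NA_A by blast+
      show False
      proof (rule fan[of c u l1 x l2])
        show "{c,u} \<in> E" using NA_uN[OF c(1)] by (simp add: insert_commute)
        show "{c,l1} \<in> E" "{c,l2} \<in> E" using l by (auto simp: NA_def N_iff)
        show "{c,x} \<in> E" using AsubN c(1) by (auto simp: N_iff insert_commute)
        show "{u,l1} \<in> E" using NA_uN[OF lA(1)] .
        show "{l1,x} \<in> E" "{x,l2} \<in> E" using AsubN lA by (auto simp: N_iff insert_commute)
        show "u \<noteq> x" using x uB by blast
        show "u \<noteq> l2" using lA uA by blast
        show "l1 \<noteq> l2" by fact
      qed
    qed
    have "u \<notin> N x" using x by (auto simp: B_def N_sym)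
    moreover have "N x \<subseteq> insert u (A u \<union> B u)" using N_sub V_split[OF u] by simp
    ultimately show "N x = {}" using AN BN by blast
  qed
  show ?thesis by (rule exI[of _ c]) (intro conjI; (fact c(1) | fact ycc | fact Aeq | fact c(2) | fact leaves | fact Biso))
qed

end

lemma book_E_mem:
  assumes mem: "{i,j} \<in> book_E k"
  obtains (a) "{i,j} = {0::nat,1}" | (b) t where "{i,j} = {0,t}" "2 \<le> t" | (c) t where "{i,j} = {1,t}" "2 \<le> t"
proof -
  have "{i,j} \<in> {{0,1}} \<or> {i,j} \<in> {{0,t} |t. 2 \<le> t \<and> t < k + 2} \<or> {i,j} \<in> {{1,t} |t. 2 \<le> t \<and> t < k + 2}"
    using mem unfolding book_E_def by (simp only: Un_iff disj_assoc)
  then show ?thesis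
  proof (elim disjE)
    assume "{i,j} \<in> {{0,1}}" then show ?thesis using a by simp
  next
    assume "{i,j} \<in> {{0,t} |t. 2 \<le> t \<and> t < k + 2}"
    then obtain t where "{i,j} = {0,t}" "2 \<le> t" by (auto simp only: mem_Collect_eq)
    then show ?thesis using b by simp
  next
    assume "{i,j} \<in> {{1,t} |t. 2 \<le> t \<and> t < k + 2}"
    then obtain t where "{i,j} = {1,t}" "2 \<le> t" by (auto simp only: mem_Collect_eq)
    then show ?thesis using c by simp
  qed
qed
lemma book0: "2 \<le> b \<Longrightarrow> b < k + 2 \<Longrightarrow> {0::nat,b} \<in> book_E k"
  unfolding book_E_def by blast
lemma book1: "2 \<le> b \<Longrightarrow> b < k + 2 \<Longrightarrow> {1::nat,b} \<in> book_E k"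
  unfolding book_E_def by blast

lemma book_E_iff:
  assumes "i < k + 2" "j < k + 2"
  shows "{i,j} \<in> book_E k \<longleftrightarrow> i \<noteq> j \<and> (i < 2 \<or> j < 2)"
proof
  assume mem: "{i,j} \<in> book_E k"
  then show "i \<noteq> j \<and> (i < 2 \<or> j < 2)"
  proof (cases rule: book_E_mem)
    case a
    then have "(i = 0 \<and> j = 1) \<or> (i = 1 \<and> j = 0)" by (simp add: doubleton_eq_iff)
    then show ?thesis by auto
  next
    case (b t)
    then have "(i = 0 \<and> j = t) \<or> (i = t \<and> j = 0)" by (simp add: doubleton_eq_iff)
    then show ?thesis using b(2) by auto
  next
    case (c t)
    then have "(i = 1 \<and> j = t) \<or> (i = t \<and> j = 1)" by (simp add: doubleton_eq_iff)
    then show ?thesis using c(2) by auto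
  qed
next
  assume h: "i \<noteq> j \<and> (i < 2 \<or> j < 2)"
  have c: "\<And>a b::nat. a < 2 \<Longrightarrow> a \<noteq> b \<Longrightarrow> b < k + 2 \<Longrightarrow> {a,b} \<in> book_E k"
  proof -
    fix a b :: nat assume a: "a < 2" and ab: "a \<noteq> b" and b: "b < k + 2"
    consider "a = 0" | "a = 1" using a by linarith
    then show "{a,b} \<in> book_E k"
    proof cases
      case 1
      then show ?thesis
      proof (cases "b = 1")
        case True then show ?thesis using 1 by (simp add: book_E_def)
      next
        case False then have "2 \<le> b" using 1 ab by simp
        then show ?thesis using 1 book0[OF _ b] by simp
      qed
    next
      case 2
      then show ?thesis
      proof (cases "b = 0")
        case True then show ?thesis using 2 by (simp add: book_E_def insert_commute)
      next
        case False then have "2 \<le> b" using 2 ab by simp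
        then show ?thesis using 2 book1[OF _ b] by simp
      qed
    qed
  qed
  show "{i,j} \<in> book_E k"
  proof (cases "i < 2")
    case True then show ?thesis using c[of i j] h assms by simp
  next
    case False
    then have "j < 2" using h by simp
    then have "{j,i} \<in> book_E k" using c[of j i] h assms by simp
    then show ?thesis by (simp add: insert_commute)
  qed
qed

lemma book_sum:
  fixes mu :: real
  assumes i: "i < k + 2"
  shows "(\<Sum>j\<in>{0..<k+2}. if {i,j} \<in> book_E k then (if j < 2 then 1 else 2 / mu) else 0)
         = (if i < 2 then 1 + 2 * real k / mu else 2)"
proof -
  have "(\<Sum>j\<in>{0..<k+2}. if {i,j} \<in> book_E k then (if j < 2 then 1 else 2 / mu) else 0)
      = (\<Sum>j\<in>{0..<k+2}. if i \<noteq> j \<and> (i < 2 \<or> j < 2) then (if j < 2 then 1 else 2 / mu) else 0)"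
    using book_E_iff[OF i] by (intro sum.cong) auto
  also have "\<dots> = (\<Sum>j\<in>{0,1} \<union> {2..<k+2}. if i \<noteq> j \<and> (i < 2 \<or> j < 2) then (if j < 2 then 1 else 2 / mu) else 0)"
    by (rule sum.cong) auto
  also have "(\<Sum>j\<in>{0,1} \<union> {2..<k+2}. if i \<noteq> j \<and> (i < 2 \<or> j < 2) then (if j < 2 then 1 else 2 / mu) else 0)
     = (\<Sum>j\<in>{0,1}. if i \<noteq> j \<and> (i < 2 \<or> j < 2) then (if j < 2 then 1 else 2 / mu) else 0)
       + (\<Sum>j\<in>{2..<k+2}. if i \<noteq> j \<and> (i < 2 \<or> j < 2) then (if j < 2 then 1 else 2 / mu) else 0)"
    by (rule sum.union_disjoint) auto
  also have "(\<Sum>j\<in>{2..<k+2}. if i \<noteq> j \<and> (i < 2 \<or> j < 2) then (if j < 2 then 1 else 2 / mu) else 0)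
     = (\<Sum>j\<in>{2..<k+2}. if i < 2 then 2 / mu else 0)"
    by (intro sum.cong) auto
  finally have eq: "(\<Sum>j\<in>{0..<k+2}. if {i,j} \<in> book_E k then (if j < 2 then 1 else 2 / mu) else 0)
     = (\<Sum>j\<in>{0,1}. if i \<noteq> j \<and> (i < 2 \<or> j < 2) then (if j < 2 then 1 else 2 / mu) else 0)
       + (\<Sum>j\<in>{2..<k+2}. if i < 2 then 2 / mu else 0)" .
  show ?thesis
  proof (cases "i < 2")
    case True
    then have "i = 0 \<or> i = 1" by linarith
    then show ?thesis using eq True by auto
  next
    case False
    then show ?thesis using eq by simp
  qed
qed

context g5 begin

lemma nonisol_iff: "v \<in> V \<Longrightarrow> (\<exists>e\<in>E. v \<in> e) \<longleftrightarrow> N v \<noteq> {}"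
proof
  assume v: "v \<in> V" and "\<exists>e\<in>E. v \<in> e"
  then obtain e where e: "e \<in> E" "v \<in> e" by blast
  then obtain p q where pq: "e = {p,q}" "p \<noteq> q" using edge_card[OF e(1)] by (meson card_2_iff)
  show "N v \<noteq> {}"
  proof (cases "v = p")
    case True
    then have "q \<in> N v" using e(1) pq by (simp add: N_iff)
    then show ?thesis by blast
  next
    case False
    then have "v = q" using e(2) pq by auto
    then have "p \<in> N v" using e(1) pq by (simp add: N_iff insert_commute)
    then show ?thesis by blast
  qed
next
  assume "N v \<noteq> {}"
  then obtain w where "w \<in> N v" by blast
  then have "{v,w} \<in> E" by (simp add: N_iff)
  then show "\<exists>e\<in>E. v \<in> e" by blast
qed

lemma eq_iso:
  assumes u: "u \<in> V" and yu: "y u = 1" and m8: "8 \<le> real (card E)"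
    and Heq: "lam^2 - lam = real (card E) - 1"
  shows "odd (card E) \<and> graph_iso (non_isolated V E) E (book_V ((card E - 1) div 2)) (book_E ((card E - 1) div 2))"
proof -
  obtain c where c: "c \<in> A u" "y c = 1" "A u = insert c (NA u c)" "card (NA u c) \<ge> 2"
    "\<forall>w\<in>NA u c. NA u w = {c}" "\<forall>x\<in>B u. N x = {}"
    using eq_struct[OF u yu m8 Heq] by blast
  define L where "L = NA u c"
  define k where "k = card L"
  have finL: "finite L" using finNA L_def by simp
  have cL: "c \<notin> L" using NA_irr L_def by simp
  have uL: "u \<notin> L" using uA NA_A L_def by blast
  have uc: "u \<noteq> c" using c(1) uA by blast
  have LA: "L \<subseteq> A u" using NA_A L_def by simp
  have cV: "c \<in> V" using c(1) A_sub by blast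
  have Nu: "N u = insert c L" using c(3) L_def by (simp add: A_def)
  have Vcases: "\<And>v. v \<in> V \<Longrightarrow> v = u \<or> v = c \<or> v \<in> L \<or> v \<in> B u"
    using in_V_cases[OF u] c(3) L_def by blast
  have noB: "\<And>v w. v \<in> B u \<Longrightarrow> w \<in> N v \<Longrightarrow> False" using c(6) by blast
  have noB': "\<And>v w. v \<in> B u \<Longrightarrow> v \<in> N w \<Longrightarrow> False" using c(6) N_sym by blast
  have Nc: "N c = insert u L"
  proof (intro equalityI subsetI)
    fix v assume v: "v \<in> N c"
    then have vV: "v \<in> V" using N_sub by blast
    show "v \<in> insert u L"
    proof -
      consider "v = u" | "v = c" | "v \<in> L" | "v \<in> B u" using Vcases[OF vV] by blast
      then show ?thesis
      proof cases
        case 2 then show ?thesis using v N_irr by blast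
      next
        case 4 then show ?thesis using noB' v by blast
      qed auto
    qed
  next
    fix v assume "v \<in> insert u L"
    then show "v \<in> N c"
    proof
      assume "v = u" then show ?thesis using c(1) by (simp add: A_def N_sym)
    next
      assume "v \<in> L" then show ?thesis by (simp add: L_def NA_def)
    qed
  qed
  have Nl: "\<And>l. l \<in> L \<Longrightarrow> N l = {u,c}"
  proof -
    fix l assume l: "l \<in> L"
    have lA: "l \<in> A u" using l LA by blast
    have NAl: "NA u l = {c}" using c(5) l L_def by simp
    show "N l = {u,c}"
    proof (intro equalityI subsetI)
      fix v assume v: "v \<in> N l"
      then have vV: "v \<in> V" using N_sub by blast
      consider "v = u" | "v \<in> A u" | "v \<in> B u" using in_V_cases[OF u vV] by blast
      then show "v \<in> {u,c}"
      proof cases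
        case 2 then have "v \<in> NA u l" using v by (simp add: NA_def)
        then show ?thesis using NAl by simp
      next
        case 3 then show ?thesis using noB' v by blast
      qed simp
    next
      fix v assume "v \<in> {u,c}"
      moreover have "u \<in> N l" using lA by (simp add: A_def N_sym)
      moreover have "c \<in> N l" using NAl by (auto simp: NA_def)
      ultimately show "v \<in> N l" by blast
    qed
  qed
  have cardNV: "\<And>v. dg V v = real (card (N v))" using dg_card[of V] N_sub by (simp add: Int_absorb1)
  have mk: "card E = 2 * k + 1"
  proof -
    have "2 * real (card E) = dg V u + (\<Sum>w\<in>A u. dg V w) + (\<Sum>x\<in>B u. dg V x)"
      using handshake sum_split[OF u, of "dg V"] by simp
    also have "dg V u = real k + 1" using cardNV Nu finL cL k_def by simp
    also have "(\<Sum>x\<in>B u. dg V x) = 0" using cardNV c(6) by simp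
    also have "(\<Sum>w\<in>A u. dg V w) = dg V c + (\<Sum>w\<in>L. dg V w)"
      using c(3) L_def finL cL by simp
    also have "dg V c = real k + 1" using cardNV Nc finL uL k_def by simp
    also have "(\<Sum>w\<in>L. dg V w) = (\<Sum>w\<in>L. 2)" using cardNV Nl uc by (intro sum.cong) auto
    finally have "2 * real (card E) = 4 * real k + 2" using k_def by simp
    then show ?thesis by linarith
  qed
  have kdef: "(card E - 1) div 2 = k" using mk by simp
  have NI: "non_isolated V E = insert u (insert c L)"
  proof -
    have "non_isolated V E = {v\<in>V. N v \<noteq> {}}" unfolding non_isolated_def using nonisol_iff by blast
    also have "\<dots> = insert u (insert c L)"
    proof (intro equalityI subsetI)
      fix v assume "v \<in> {v\<in>V. N v \<noteq> {}}"
      then have v: "v \<in> V" "N v \<noteq> {}" by auto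
      then show "v \<in> insert u (insert c L)" using Vcases[OF v(1)] c(6) by blast
    next
      fix v assume v: "v \<in> insert u (insert c L)"
      have "v \<in> V" using v u cV LA A_sub by blast
      moreover have "N v \<noteq> {}" using v Nu Nc Nl by auto
      ultimately show "v \<in> {v\<in>V. N v \<noteq> {}}" by simp
    qed
    finally show ?thesis .
  qed
  have cardI: "card {2..<k+2} = k" by simp
  obtain g where g: "bij_betw g L {2..<k+2}"
    using finite_same_card_bij[OF finL _ ] cardI k_def by (metis finite_atLeastLessThan)
  define f where "f v = (if v = u then 0 else if v = c then 1 else g v)" for v
  have fL: "\<And>v. v \<in> L \<Longrightarrow> f v = g v \<and> 2 \<le> g v \<and> g v < k + 2"
    using g uL cL unfolding f_def bij_betw_def by force
  have fu: "f u = 0" and fc: "f c = 1" using uc by (simp_all add: f_def)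
  have bij: "bij_betw f (insert u (insert c L)) (book_V k)"
    unfolding bij_betw_def book_V_def
  proof
    show "inj_on f (insert u (insert c L))"
    proof (rule inj_onI)
      fix p q assume p: "p \<in> insert u (insert c L)" and q: "q \<in> insert u (insert c L)" and e: "f p = f q"
      show "p = q"
      proof -
        consider "p = u" | "p = c" | "p \<in> L" using p by blast
        then show ?thesis
        proof cases
          case 1 then show ?thesis using q e fu fc fL by fastforce
        next
          case 2 then show ?thesis using q e fu fc fL by fastforce
        next
          case 3
          then have "q \<in> L" using q e fu fc fL by fastforce
          then show ?thesis using 3 e fL g unfolding bij_betw_def inj_on_def by metis
        qed
      qed
    qed
    show "f ` insert u (insert c L) = {0..<k+2}"
    proof -
      have "f ` L = g ` L" using fL by (auto simp: image_def)
      also have "\<dots> = {2..<k+2}" using g by (simp add: bij_betw_def)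
      finally have "f ` L = {2..<k+2}" .
      then have "f ` insert u (insert c L) = {0,1} \<union> {2..<k+2}" using fu fc by auto
      also have "\<dots> = {0..<k+2}" by auto
      finally show ?thesis .
    qed
  qed
  have frange: "\<And>p. p \<in> insert u (insert c L) \<Longrightarrow> f p < k + 2" using fu fc fL by auto
  have finj: "inj_on f (insert u (insert c L))" using bij by (simp add: bij_betw_def)
  have flt2: "\<And>p. p \<in> insert u (insert c L) \<Longrightarrow> f p < 2 \<longleftrightarrow> p = u \<or> p = c" using fu fc fL by force
  have edges: "\<forall>p\<in>insert u (insert c L). \<forall>q\<in>insert u (insert c L). {p,q} \<in> E \<longleftrightarrow> {f p, f q} \<in> book_E k"
  proof (intro ballI)
    fix p q assume p: "p \<in> insert u (insert c L)" and q: "q \<in> insert u (insert c L)"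
    have r: "{f p, f q} \<in> book_E k \<longleftrightarrow> p \<noteq> q \<and> (p = u \<or> p = c \<or> q = u \<or> q = c)"
      using book_E_iff[OF frange[OF p] frange[OF q]] flt2[OF p] flt2[OF q] inj_on_eq_iff[OF finj p q] by blast
    have l: "{p,q} \<in> E \<longleftrightarrow> q \<in> N p" by (simp add: N_iff)
    show "{p,q} \<in> E \<longleftrightarrow> {f p, f q} \<in> book_E k"
    proof -
      consider "p = u" | "p = c" | "p \<in> L" using p by blast
      then show ?thesis
      proof cases
        case 1 then show ?thesis using l r Nu q uc uL by auto
      next
        case 2 then show ?thesis using l r Nc q uc cL by auto
      next
        case 3 then show ?thesis using l r Nl[OF 3] q uL cL by auto
      qed
    qed
  qed
  have "odd (card E)" using mk by simp
  moreover have "graph_iso (non_isolated V E) E (book_V k) (book_E k)"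
    unfolding graph_iso_def NI using bij edges by blast
  ultimately show ?thesis using kdef by simp
qed

end

lemma mu_eq:
  fixes m :: real assumes "m \<ge> 1"
  shows "((1 + sqrt (4 * m - 3)) / 2)^2 - (1 + sqrt (4 * m - 3)) / 2 = m - 1"
proof -
  have s: "(sqrt (4 * m - 3))^2 = 4 * m - 3" using assms by simp
  show ?thesis by (simp add: power2_eq_square field_simps) (use s in \<open>simp add: power2_eq_square algebra_simps\<close>)
qed

lemma bound_of:
  fixes L m :: real assumes m: "m \<ge> 1" and h: "L^2 - L \<le> m - 1"
  shows "L \<le> (1 + sqrt (4 * m - 3)) / 2"
proof (cases "2 * L - 1 \<le> 0")
  case True
  have "0 \<le> sqrt (4 * m - 3)" using m by simp
  then have "2 * L \<le> 1 + sqrt (4 * m - 3)" using True by linarith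
  then show ?thesis by simp
next
  case False
  have "(2 * L - 1)^2 \<le> 4 * m - 3" using h by (simp add: power2_eq_square algebra_simps)
  then have "sqrt ((2 * L - 1)^2) \<le> sqrt (4 * m - 3)" by (rule real_sqrt_le_mono)
  then have "2 * L - 1 \<le> sqrt (4 * m - 3)" using False by simp
  then show ?thesis by simp
qed

lemma book_eig:
  assumes G: "simple_graph V E" and iso: "graph_iso (non_isolated V E) E (book_V k) (book_E k)"
    and mu: "mu > 0" and mueq: "mu = 1 + 2 * real k / mu"
  shows "adj_eigenvalue V E mu"
proof -
  define V' where "V' = non_isolated V E"
  obtain f where f: "bij_betw f V' (book_V k)"
    and fe: "\<forall>p\<in>V'. \<forall>q\<in>V'. {p,q} \<in> E \<longleftrightarrow> {f p, f q} \<in> book_E k"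
    using iso unfolding graph_iso_def V'_def by blast
  have finV: "finite V" using G by (simp add: simple_graph_def)
  have V'V: "V' \<subseteq> V" unfolding V'_def non_isolated_def by auto
  define xb where "xb j = (if j < 2 then 1 else 2 / mu)" for j :: nat
  define x where "x v = (if v \<in> V' then xb (f v) else 0)" for v
  have isol: "\<And>v w. v \<in> V \<Longrightarrow> v \<notin> V' \<Longrightarrow> adj E v w = 0"
    unfolding V'_def non_isolated_def adj_def by auto
  have inV': "\<And>v w. v \<in> V' \<Longrightarrow> adj E v w \<noteq> 0 \<Longrightarrow> w \<in> V'"
  proof -
    fix v w assume "v \<in> V'" "adj E v w \<noteq> 0"
    then have e: "{v,w} \<in> E" by (simp add: adj_def split: if_splits)
    then have "w \<in> V" using G unfolding simple_graph_def by auto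
    then show "w \<in> V'" using e unfolding V'_def non_isolated_def by (auto simp: insert_commute)
  qed
  have eq: "\<forall>v\<in>V. (\<Sum>w\<in>V. adj E v w * x w) = mu * x v"
  proof
    fix v assume v: "v \<in> V"
    show "(\<Sum>w\<in>V. adj E v w * x w) = mu * x v"
    proof (cases "v \<in> V'")
      case False
      then show ?thesis using isol[OF v False] by (simp add: x_def)
    next
      case True
      have fv: "f v \<in> book_V k" using f True by (auto simp: bij_betw_def)
      then have fvk: "f v < k + 2" by (simp add: book_V_def)
      have "(\<Sum>w\<in>V. adj E v w * x w) = (\<Sum>w\<in>V'. adj E v w * x w)"
        by (rule sum.mono_neutral_right[OF finV V'V]) (auto simp: x_def)
      also have "\<dots> = (\<Sum>w\<in>V'. if {f v, f w} \<in> book_E k then xb (f w) else 0)"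
        using fe True by (intro sum.cong refl) (auto simp: adj_def x_def)
      also have "\<dots> = (\<Sum>j\<in>book_V k. if {f v, j} \<in> book_E k then xb j else 0)"
        by (rule sum.reindex_bij_betw[OF f])
      also have "\<dots> = (if f v < 2 then 1 + 2 * real k / mu else 2)"
        unfolding book_V_def xb_def using book_sum[OF fvk, of mu] by simp
      also have "\<dots> = mu * x v"
        using True mu mueq by (auto simp: x_def xb_def)
      finally show ?thesis .
    qed
  qed
  have "0 \<in> book_V k" by (simp add: book_V_def)
  then have "0 \<in> f ` V'" using f by (simp add: bij_betw_def)
  then obtain v0 where v0: "v0 \<in> V'" "f v0 = 0" by (metis imageE)
  have "x v0 \<noteq> 0" using v0 by (simp add: x_def xb_def)
  then show ?thesis unfolding adj_eigenvalue_def using eq v0 V'V by blast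
qed

theorem theorem1p4:
  fixes V :: "'a set" and E :: "'a set set" and m :: nat
  assumes "simple_graph V E"
    and "\<not> contains_subgraph fan5_V fan5_E V E"
    and "m = card E"
    and "m \<ge> 8"
  shows "spectral_radius V E \<le> (1 + sqrt (4 * real m - 3)) / 2
    \<and> (spectral_radius V E = (1 + sqrt (4 * real m - 3)) / 2 \<longleftrightarrow>
         odd m \<and> graph_iso (non_isolated V E) E (book_V ((m - 1) div 2)) (book_E ((m - 1) div 2)))"
proof -
  note G = assms(1) and nov5 = assms(2) and md = assms(3) and m8 = assms(4)
  define lam where "lam = spectral_radius V E"
  define mu where "mu = (1 + sqrt (4 * real m - 3)) / 2"
  have finV: "finite V" using G by (simp add: simple_graph_def)
  have ne: "V \<noteq> {}"
  proof
    assume V0: "V = {}"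
    have "E \<noteq> {}" using m8 md by auto
    then obtain e where e: "e \<in> E" by blast
    then have "card e = 2" "e \<subseteq> V" using G by (auto simp: simple_graph_def)
    then show False using V0 by auto
  qed
  obtain y0 where y0: "\<forall>v. 0 \<le> y0 v" "\<forall>v. v \<notin> V \<longrightarrow> y0 v = 0" "\<exists>v\<in>V. y0 v \<noteq> 0"
      "\<forall>u\<in>V. Ax V E y0 u = lam * y0 u"
    using spec_char(1)[OF G ne] unfolding lam_def by blast
  have allle: "\<And>\<mu>. adj_eigenvalue V E \<mu> \<Longrightarrow> \<mu> \<le> lam" using spec_char(2)[OF G ne] lam_def by blast
  define M where "M = Max (y0 ` V)"
  have Min: "M \<in> y0 ` V" unfolding M_def using finV ne by simp
  then obtain u where u: "u \<in> V" "y0 u = M" by auto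
  have Mge: "\<And>v. v \<in> V \<Longrightarrow> y0 v \<le> M" unfolding M_def using finV by simp
  have M0: "M > 0"
  proof -
    obtain v where v: "v \<in> V" "y0 v \<noteq> 0" using y0(3) by blast
    then have "y0 v > 0" using y0(1) by (simp add: order_le_neq_trans)
    then show ?thesis using Mge[OF v(1)] by simp
  qed
  define y where "y v = y0 v / M" for v
  interpret g5 V E y lam
  proof unfold_locales
    show "simple_graph V E" by (rule G)
    show "\<not> contains_subgraph fan5_V fan5_E V E" by (rule nov5)
    fix v
    show "0 \<le> y v" using y0(1) M0 by (simp add: y_def)
    assume v: "v \<in> V"
    show "y v \<le> 1" using Mge[OF v] M0 by (simp add: y_def)
    have "(\<Sum>w\<in>V. adj E v w * y w) = (\<Sum>w\<in>V. adj E v w * y0 w) / M"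
      by (simp add: y_def sum_divide_distrib)
    also have "(\<Sum>w\<in>V. adj E v w * y0 w) = lam * y0 v" using y0(4) v by (simp add: Ax_def)
    finally show "(\<Sum>w\<in>V. adj E v w * y w) = lam * y v" by (simp add: y_def)
  qed
  have yu: "y u = 1" using u M0 by (simp add: y_def)
  have m8r: "8 \<le> real (card E)" using m8 md by simp
  have m1: "real m \<ge> 1" using m8 by simp
  have ineq: "lam^2 - lam \<le> real m - 1" using main_ineq[OF u(1) yu m8r] md by simp
  have le: "lam \<le> mu" unfolding mu_def using bound_of[OF m1 ineq] by simp
  have mueq: "mu^2 - mu = real m - 1" unfolding mu_def using mu_eq[OF m1] by simp
  have iff: "lam = mu \<longleftrightarrow> odd m \<and> graph_iso (non_isolated V E) E (book_V ((m - 1) div 2)) (book_E ((m - 1) div 2))"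
  proof
    assume "lam = mu"
    then have "lam^2 - lam = real (card E) - 1" using mueq md by simp
    then show "odd m \<and> graph_iso (non_isolated V E) E (book_V ((m - 1) div 2)) (book_E ((m - 1) div 2))"
      using eq_iso[OF u(1) yu m8r] md by simp
  next
    assume h: "odd m \<and> graph_iso (non_isolated V E) E (book_V ((m - 1) div 2)) (book_E ((m - 1) div 2))"
    define k where "k = (m - 1) div 2"
    have mk: "real m - 1 = 2 * real k"
    proof -
      have "odd m" using h by simp
      then have "m mod 2 = 1" by presburger
      then have "m = 2 * k + 1" unfolding k_def by presburger
      then show ?thesis by simp
    qed
    have mupos: "mu > 0" unfolding mu_def using m1 by (simp add: add_pos_nonneg)
    have mu2: "mu = 1 + 2 * real k / mu"
    proof -
      have "mu * mu = mu + 2 * real k" using mueq mk by (simp add: power2_eq_square)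
      then show ?thesis using mupos by (simp add: field_simps)
    qed
    have "adj_eigenvalue V E mu" using book_eig[OF G _ mupos mu2] h k_def by simp
    then have "mu \<le> lam" by (rule allle)
    then show "lam = mu" using le by simp
  qed
  show ?thesis using le iff unfolding lam_def mu_def by simp
qed

end
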